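(* Let $T$ be a tree on $[m]$ with depth-first walk $X$ and height process $H$, and let $\mathcal Q\subset\mathbb Z_{\ge0}\times\mathbb Z_{\ge0}$ be finite. Suppose $\mathcal Q\cap X=\mathcal Q\cap(H/2)$ and let $k=|\mathcal Q\cap X|$. Then, viewing $G^X=G^X(T,\mathcal Q)$ and $G^H=G^H(T,\mathcal Q)$ as metric spaces on their common vertex set with graph distance (rooted at vertex $1$), \[d_{GH}(G^X,G^H)\le k\big(\max_{0\le i<m}|X(i)-H(i)/2|+2\big).\]
   Context: Ordered depth-first search ${\bf oDFS}(T)$ for a tree $T$ on $[m]$ rooted at $1$: set $\mathcal O_0=(1)$ (ordered list), $\mathcal A_0=\emptyset$; for $i=0,\dots,m-1$ let $v_i$ be the first element of $\mathcal O_i$, $\mathcal N_i$ the neighbours of $v_i$ outside $\mathcal A_i\cup\mathcal O_i$, $\mathcal A_{i+1}=\mathcal A_i\cup\{v_i\}$, and $\mathcal O_{i+1}$ obtained by deleting $v_i$ from the front and placing $\mathcal N_i$ in increasing order at the front. Depth-first walk $X(i)=|\mathcal O_i|-1$; height process $H(i)=$ distance in $T$ from $1$ to $v_i$ ($0\le i<m$; both set to $0$ for $i\ge m$). For $S\subset\mathbb R^+\times\mathbb R^+$ and $f$, $S\cap f:=\{(x,y)\in S:0<y\le f(x)\}$. $G^X(T,\mathcal Q)$: add to $T$, for each $(i,j)\in\mathcal Q\cap X$, an edge between $v_i$ and the $j$-th vertex of $\mathcal O_i$ counted from the end of the list. $G^H(T,\mathcal Q)$: add to $T$, for each $(i,j)\in\mathcal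 Q$ with $0<2j\le H(i)$, an edge between $v_i$ and the vertex at distance $2j-1$ from the root on the path from the root to $v_i$ in $T$. Gromov–Hausdorff distance between rooted compact metric spaces $(X,\rho),(X',\rho')$: $d_{GH}=\inf\{d_H(\phi(X),\phi'(X'))\vee\delta(\phi(\rho),\phi'(\rho'))\}$ over all metric spaces $(M,\delta)$ and isometric embeddings $\phi:X\to M$, $\phi':X'\to M$, where $d_H$ is the Hausdorff distance. *)

theory Defs
  imports Complex_Main
begin

definition walk_of :: "nat set set \<Rightarrow> nat list \<Rightarrow> bool" where
  "walk_of E p \<longleftrightarrow> p \<noteq> [] \<and> (\<forall>i. Suc i < length p \<longrightarrow> {p ! i, p ! Suc i} \<in> E)"

definition gdist :: "nat set set \<Rightarrow> nat \<Rightarrow> nat \<Rightarrow> nat" where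
  "gdist E u v = (LEAST n. \<exists>p. walk_of E p \<and> hd p = u \<and> last p = v \<and> length p = Suc n)"

definition connected_on :: "nat set \<Rightarrow> nat set set \<Rightarrow> bool" where
  "connected_on V E \<longleftrightarrow> (\<forall>u\<in>V. \<forall>v\<in>V. \<exists>p. walk_of E p \<and> hd p = u \<and> last p = v)"

text \<open>A tree on [m] = {1..m}: a connected simple graph on {1..m} that is minimally connected
  (removing any edge disconnects it).  We require m \<ge> 1 since the tree is rooted at 1.\<close>
definition is_tree :: "nat \<Rightarrow> nat set set \<Rightarrow> bool" where
  "is_tree m E \<longleftrightarrow> 1 \<le> m
     \<and> E \<subseteq> {{u, v} | u v. u \<noteq> v \<and> u \<in> {1..m} \<and> v \<in> {1..m}}
     \<and> connected_on {1..m} E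
     \<and> (\<forall>e\<in>E. \<not> connected_on {1..m} (E - {e}))"

definition odfs_step :: "nat set set \<Rightarrow> nat list \<times> nat set \<Rightarrow> nat list \<times> nat set" where
  "odfs_step E = (\<lambda>(Os, A).
     let v = hd Os;
         N = sorted_list_of_set {w. {v, w} \<in> E \<and> w \<notin> A \<and> w \<notin> set Os}
     in (N @ tl Os, insert v A))"

definition odfs_state :: "nat set set \<Rightarrow> nat \<Rightarrow> nat list \<times> nat set" where
  "odfs_state E i = (odfs_step E ^^ i) ([1], {})"

definition odfs_O :: "nat set set \<Rightarrow> nat \<Rightarrow> nat list" where
  "odfs_O E i = fst (odfs_state E i)"

definition odfs_v :: "nat set set \<Rightarrow> nat \<Rightarrow> nat" where
  "odfs_v E i = hd (odfs_O E i)"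

definition dfs_X :: "nat \<Rightarrow> nat set set \<Rightarrow> nat \<Rightarrow> int" where
  "dfs_X m E i = (if i < m then int (length (odfs_O E i)) - 1 else 0)"

definition dfs_H :: "nat \<Rightarrow> nat set set \<Rightarrow> nat \<Rightarrow> nat" where
  "dfs_H m E i = (if i < m then gdist E 1 (odfs_v E i) else 0)"

definition under :: "(nat \<times> nat) set \<Rightarrow> (nat \<Rightarrow> real) \<Rightarrow> (nat \<times> nat) set" where
  "under S f = {(x, y) \<in> S. 0 < real y \<and> real y \<le> f x}"

definition tree_anc :: "nat \<Rightarrow> nat set set \<Rightarrow> nat \<Rightarrow> nat \<Rightarrow> nat" where
  "tree_anc m E v d = (THE w. w \<in> {1..m} \<and> gdist E 1 w = d \<and> gdist E 1 w + gdist E w v = gdist E 1 v)"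

definition GX :: "nat \<Rightarrow> nat set set \<Rightarrow> (nat \<times> nat) set \<Rightarrow> nat set set" where
  "GX m E Q = E \<union> {{odfs_v E i, rev (odfs_O E i) ! (j - 1)} | i j.
                     (i, j) \<in> under Q (\<lambda>x. real_of_int (dfs_X m E x))}"

definition GH :: "nat \<Rightarrow> nat set set \<Rightarrow> (nat \<times> nat) set \<Rightarrow> nat set set" where
  "GH m E Q = E \<union> {{odfs_v E i, tree_anc m E (odfs_v E i) (2 * j - 1)} | i j.
                     (i, j) \<in> Q \<and> 0 < 2 * j \<and> 2 * j \<le> dfs_H m E i}"

definition pseudometric_on :: "'c set \<Rightarrow> ('c \<Rightarrow> 'c \<Rightarrow> real) \<Rightarrow> bool" where
  "pseudometric_on S \<delta> \<longleftrightarrow>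
     (\<forall>x\<in>S. \<delta> x x = 0) \<and> (\<forall>x\<in>S. \<forall>y\<in>S. 0 \<le> \<delta> x y \<and> \<delta> x y = \<delta> y x) \<and>
     (\<forall>x\<in>S. \<forall>y\<in>S. \<forall>z\<in>S. \<delta> x z \<le> \<delta> x y + \<delta> y z)"

definition hausdorff_dist :: "('c \<Rightarrow> 'c \<Rightarrow> real) \<Rightarrow> 'c set \<Rightarrow> 'c set \<Rightarrow> real" where
  "hausdorff_dist \<delta> A B =
     max (SUP a\<in>A. INF b\<in>B. \<delta> a b) (SUP b\<in>B. INF a\<in>A. \<delta> a b)"

text \<open>Infimum over all ways of isometrically embedding both spaces in a common
  space; equivalently over all pseudometrics on the disjoint union extending both metrics
  (the image of the two embeddings in an ambient metric space M pulls back to such a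
  pseudometric, and conversely its metric quotient is such an M).\<close>
definition dGH :: "'a set \<Rightarrow> ('a \<Rightarrow> 'a \<Rightarrow> real) \<Rightarrow> 'a \<Rightarrow> 'b set \<Rightarrow> ('b \<Rightarrow> 'b \<Rightarrow> real) \<Rightarrow> 'b \<Rightarrow> real" where
  "dGH X d \<rho> X' d' \<rho>' = Inf {max (hausdorff_dist \<delta> (Inl ` X) (Inr ` X')) (\<delta> (Inl \<rho>) (Inr \<rho>')) | \<delta>.
       pseudometric_on (Inl ` X \<union> Inr ` X') \<delta> \<and>
       (\<forall>x\<in>X. \<forall>y\<in>X. \<delta> (Inl x) (Inl y) = d x y) \<and>
       (\<forall>x\<in>X'. \<forall>y\<in>X'. \<delta> (Inr x) (Inr y) = d' x y)}"

end

theory Submission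
  imports Defs
begin

lemma dGH_bound:
  fixes V :: "nat set" and d1 d2 :: "nat \<Rightarrow> nat \<Rightarrow> real" and D :: real
  assumes fin: "finite V" and ne: "\<rho> \<in> V"
    and z1: "\<And>x. x \<in> V \<Longrightarrow> d1 x x = 0" and z2: "\<And>x. x \<in> V \<Longrightarrow> d2 x x = 0"
    and s1: "\<And>x y. x \<in> V \<Longrightarrow> y \<in> V \<Longrightarrow> d1 x y = d1 y x"
    and s2: "\<And>x y. x \<in> V \<Longrightarrow> y \<in> V \<Longrightarrow> d2 x y = d2 y x"
    and n1: "\<And>x y. x \<in> V \<Longrightarrow> y \<in> V \<Longrightarrow> 0 \<le> d1 x y"
    and n2: "\<And>x y. x \<in> V \<Longrightarrow> y \<in> V \<Longrightarrow> 0 \<le> d2 x y"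
    and t1: "\<And>x y z. x \<in> V \<Longrightarrow> y \<in> V \<Longrightarrow> z \<in> V \<Longrightarrow> d1 x z \<le> d1 x y + d1 y z"
    and t2: "\<And>x y z. x \<in> V \<Longrightarrow> y \<in> V \<Longrightarrow> z \<in> V \<Longrightarrow> d2 x z \<le> d2 x y + d2 y z"
    and dd: "\<And>x y. x \<in> V \<Longrightarrow> y \<in> V \<Longrightarrow> \<bar>d1 x y - d2 x y\<bar> \<le> D"
  shows "dGH V d1 \<rho> V d2 \<rho> \<le> D / 2"
proof -
  define c where "c x y = Min ((\<lambda>z. d1 x z + D/2 + d2 z y) ` V)" for x y
  have cle: "c x y \<le> d1 x z + D/2 + d2 z y" if "z \<in> V" for x y z
    unfolding c_def using fin that by (intro Min_le) auto
  have cex: "\<exists>z\<in>V. c x y = d1 x z + D/2 + d2 z y" for x y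
  proof -
    have "c x y \<in> (\<lambda>z. d1 x z + D/2 + d2 z y) ` V"
      unfolding c_def using fin ne by (intro Min_in) auto
    then show ?thesis by auto
  qed
  have D0: "0 \<le> D" using dd[OF ne ne] z1[OF ne] z2[OF ne] by simp
  define \<delta> where "\<delta> p q = (case p of Inl x \<Rightarrow> (case q of Inl y \<Rightarrow> d1 x y | Inr y \<Rightarrow> c x y)
                               | Inr x \<Rightarrow> (case q of Inl y \<Rightarrow> c y x | Inr y \<Rightarrow> d2 x y))" for p q
  have [simp]: "\<delta> (Inl x) (Inl y) = d1 x y" "\<delta> (Inr x) (Inr y) = d2 x y"
    "\<delta> (Inl x) (Inr y) = c x y" "\<delta> (Inr x) (Inl y) = c y x" for x y
    by (simp_all add: \<delta>_def)
  have cnn: "0 \<le> c x y" if "x \<in> V" "y \<in> V" for x y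
  proof -
    obtain z where z: "z \<in> V" "c x y = d1 x z + D/2 + d2 z y" using cex by blast
    then show ?thesis using n1[OF that(1) z(1)] n2[OF z(1) that(2)] D0 by simp
  qed
  have A1: "d1 x x' \<le> c x y + c x' y" if "x \<in> V" "x' \<in> V" "y \<in> V" for x x' y
  proof -
    obtain z where z: "z \<in> V" "c x y = d1 x z + D/2 + d2 z y" using cex by blast
    obtain z' where z': "z' \<in> V" "c x' y = d1 x' z' + D/2 + d2 z' y" using cex by blast
    have "d1 x x' \<le> d1 x z + d1 z z' + d1 z' x'"
      using t1[OF that(1) z(1) z'(1)] t1[OF that(1) z'(1) that(2)] by simp
    moreover have "d1 z z' \<le> d2 z z' + D" using dd[OF z(1) z'(1)] by simp
    moreover have "d2 z z' \<le> d2 z y + d2 y z'" using t2 z z' that by simp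
    moreover have "d2 y z' = d2 z' y" using s2 z' that by simp
    moreover have "d1 z' x' = d1 x' z'" using s1 z' that by simp
    ultimately show ?thesis using z z' by simp
  qed
  have A2: "d2 y y' \<le> c x y + c x y'" if "x \<in> V" "y \<in> V" "y' \<in> V" for x y y'
  proof -
    obtain z where z: "z \<in> V" "c x y = d1 x z + D/2 + d2 z y" using cex by blast
    obtain z' where z': "z' \<in> V" "c x y' = d1 x z' + D/2 + d2 z' y'" using cex by blast
    have "d2 y y' \<le> d2 y z + d2 z z' + d2 z' y'"
      using t2[OF that(2) z(1) z'(1)] t2[OF that(2) z'(1) that(3)] by simp
    moreover have "d2 z z' \<le> d1 z z' + D" using dd[OF z(1) z'(1)] by simp
    moreover have "d1 z z' \<le> d1 z x + d1 x z'" using t1 z z' that by simp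
    moreover have "d1 z x = d1 x z" using s1 z that by simp
    moreover have "d2 y z = d2 z y" using s2 z that by simp
    ultimately show ?thesis using z z' by simp
  qed
  have B1: "c x y \<le> d1 x x' + c x' y" if "x \<in> V" "x' \<in> V" "y \<in> V" for x x' y
  proof -
    obtain z where z: "z \<in> V" "c x' y = d1 x' z + D/2 + d2 z y" using cex by blast
    have "c x y \<le> d1 x z + D/2 + d2 z y" using cle z by blast
    also have "\<dots> \<le> d1 x x' + c x' y" using t1[OF that(1) that(2) z(1)] z by simp
    finally show ?thesis .
  qed
  have B2: "c x y \<le> c x y' + d2 y' y" if "x \<in> V" "y' \<in> V" "y \<in> V" for x y' y
  proof -
    obtain z where z: "z \<in> V" "c x y' = d1 x z + D/2 + d2 z y'" using cex by blast
    have "c x y \<le> d1 x z + D/2 + d2 z y" using cle z by blast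
    also have "\<dots> \<le> c x y' + d2 y' y" using t2[OF z(1) that(2) that(3)] z by simp
    finally show ?thesis .
  qed
  have B1': "c x y \<le> c x' y + d1 x' x" if "x \<in> V" "x' \<in> V" "y \<in> V" for x x' y
    using B1[OF that] s1 that by simp
  have B2': "c x y \<le> d2 y y' + c x y'" if "x \<in> V" "y' \<in> V" "y \<in> V" for x y' y
    using B2[OF that] s2 that by simp
  let ?U = "Inl ` V \<union> Inr ` V :: (nat + nat) set"
  have pm: "pseudometric_on ?U \<delta>"
    unfolding pseudometric_on_def
  proof (intro conjI ballI)
    fix p assume "p \<in> ?U" then show "\<delta> p p = 0" using z1 z2 by auto
  next
    fix p q assume "p \<in> ?U" "q \<in> ?U"
    then show "0 \<le> \<delta> p q" using n1 n2 cnn by auto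
  next
    fix p q assume "p \<in> ?U" "q \<in> ?U"
    then show "\<delta> p q = \<delta> q p" using s1 s2 by auto
  next
    fix p q r assume "p \<in> ?U" "q \<in> ?U" "r \<in> ?U"
    then show "\<delta> p r \<le> \<delta> p q + \<delta> q r"
      using t1 t2 A1 A2 B1 B2 B1' B2' by auto
  qed
  have cD: "c x x \<le> D/2" if "x \<in> V" for x
    using cle[OF that, of x x] z1 z2 that by simp
  have h1: "(SUP a\<in>(Inl ` V :: (nat+nat) set). INF b\<in>(Inr ` V :: (nat+nat) set). \<delta> a b) \<le> D/2"
  proof (rule cSUP_least)
    show "(Inl ` V :: (nat+nat) set) \<noteq> {}" using ne by auto
    fix a :: "nat+nat" assume "a \<in> Inl ` V"
    then obtain x where x: "x \<in> V" "a = Inl x" by auto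
    have "(INF b\<in>(Inr ` V :: (nat+nat) set). \<delta> a b) \<le> \<delta> a (Inr x)"
      using fin x by (intro cINF_lower) auto
    then show "(INF b\<in>(Inr ` V :: (nat+nat) set). \<delta> a b) \<le> D/2" using cD[OF x(1)] x by simp
  qed
  have h2: "(SUP b\<in>(Inr ` V :: (nat+nat) set). INF a\<in>(Inl ` V :: (nat+nat) set). \<delta> a b) \<le> D/2"
  proof (rule cSUP_least)
    show "(Inr ` V :: (nat+nat) set) \<noteq> {}" using ne by auto
    fix b :: "nat+nat" assume "b \<in> Inr ` V"
    then obtain x where x: "x \<in> V" "b = Inr x" by auto
    have "(INF a\<in>(Inl ` V :: (nat+nat) set). \<delta> a b) \<le> \<delta> (Inl x) b"
      using fin x by (intro cINF_lower) auto
    then show "(INF a\<in>(Inl ` V :: (nat+nat) set). \<delta> a b) \<le> D/2" using cD[OF x(1)] x by simp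
  qed
  let ?S = "{max (hausdorff_dist \<delta> (Inl ` V) (Inr ` V)) (\<delta> (Inl \<rho>) (Inr \<rho>)) | \<delta>.
       pseudometric_on (Inl ` V \<union> Inr ` V) \<delta> \<and>
       (\<forall>x\<in>V. \<forall>y\<in>V. \<delta> (Inl x) (Inl y) = d1 x y) \<and>
       (\<forall>x\<in>V. \<forall>y\<in>V. \<delta> (Inr x) (Inr y) = d2 x y)}"
  have mem: "max (hausdorff_dist \<delta> (Inl ` V) (Inr ` V)) (\<delta> (Inl \<rho>) (Inr \<rho>)) \<in> ?S"
  proof -
    have "\<forall>x\<in>V. \<forall>y\<in>V. \<delta> (Inl x) (Inl y) = d1 x y" "\<forall>x\<in>V. \<forall>y\<in>V. \<delta> (Inr x) (Inr y) = d2 x y"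
      by simp_all
    then show ?thesis using pm by (intro CollectI exI[of _ \<delta>] conjI refl)
  qed
  have bdd: "bdd_below ?S"
  proof (rule bdd_belowI)
    fix s assume "s \<in> ?S"
    then obtain \<delta>' where "s = max (hausdorff_dist \<delta>' (Inl ` V) (Inr ` V)) (\<delta>' (Inl \<rho>) (Inr \<rho>))"
      "pseudometric_on (Inl ` V \<union> Inr ` V) \<delta>'" by blast
    then have s: "s = max (hausdorff_dist \<delta>' (Inl ` V) (Inr ` V)) (\<delta>' (Inl \<rho>) (Inr \<rho>))"
      and "\<forall>x\<in>Inl ` V \<union> Inr ` V. \<forall>y\<in>Inl ` V \<union> Inr ` V. 0 \<le> \<delta>' x y"
      unfolding pseudometric_on_def by blast+
    then have "0 \<le> \<delta>' (Inl \<rho>) (Inr \<rho>)" using ne by blast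
    then show "0 \<le> s" unfolding s by (rule order_trans[OF _ max.cobounded2])
  qed
  have "dGH V d1 \<rho> V d2 \<rho> = Inf ?S" unfolding dGH_def by simp
  also have "\<dots> \<le> max (hausdorff_dist \<delta> (Inl ` V) (Inr ` V)) (\<delta> (Inl \<rho>) (Inr \<rho>))"
    by (rule cInf_lower[OF mem bdd])
  also have "\<dots> \<le> D/2" using h1 h2 cD[OF ne] unfolding hausdorff_dist_def by simp
  finally show ?thesis .
qed

lemma walk_single[simp]: "walk_of F [x]"
  by (simp add: walk_of_def)

lemma walk_mono: "walk_of F p \<Longrightarrow> F \<subseteq> F' \<Longrightarrow> walk_of F' p"
  unfolding walk_of_def by blast

lemma walk_rev: assumes w: "walk_of F p" shows "walk_of F (rev p)"
  unfolding walk_of_def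
proof (intro conjI allI impI)
  show "rev p \<noteq> []" using w by (simp add: walk_of_def)
  fix i assume i: "Suc i < length (rev p)"
  then have "{p ! (length p - Suc (Suc i)), p ! Suc (length p - Suc (Suc i))} \<in> F"
    using w by (auto simp: walk_of_def)
  moreover have "Suc (length p - Suc (Suc i)) = length p - Suc i" using i by simp
  ultimately show "{rev p ! i, rev p ! Suc i} \<in> F" using i by (simp add: rev_nth insert_commute)
qed

lemma walk_append:
  assumes "walk_of F p" "walk_of F q" "last p = hd q"
  shows "walk_of F (p @ tl q)"
  unfolding walk_of_def
proof (intro conjI allI impI)
  show "p @ tl q \<noteq> []" using assms(1) by (simp add: walk_of_def)
  fix i assume i: "Suc i < length (p @ tl q)"
  have pne: "p \<noteq> []" "q \<noteq> []" using assms by (auto simp: walk_of_def)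
  show "{(p @ tl q) ! i, (p @ tl q) ! Suc i} \<in> F"
  proof (cases "Suc i < length p")
    case True then show ?thesis using assms(1) by (simp add: walk_of_def nth_append)
  next
    case False
    then have "i - (length p - 1) < length q" "Suc (i - (length p - 1)) < length q"
      using i pne by auto
    have e: "(p @ tl q) ! i = q ! (i - (length p - 1))"
    proof (cases "i < length p")
      case True
      then have "i = length p - 1" using False by simp
      then show ?thesis using assms(3) pne by (simp add: nth_append last_conv_nth hd_conv_nth)
    next
      case False
      then have "i - (length p - 1) = Suc (i - length p)" using pne by (cases p) auto
      moreover have "tl q ! (i - length p) = q ! Suc (i - length p)" using pne by (cases q) auto
      ultimately show ?thesis using False pne by (simp add: nth_append)
    qed
    have e3: "Suc (i - (length p - 1)) = Suc (Suc i - length p)"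
      using False pne by (cases p) auto
    have "tl q ! (Suc i - length p) = q ! Suc (Suc i - length p)" using pne by (cases q) auto
    then have e2: "(p @ tl q) ! Suc i = q ! Suc (i - (length p - 1))"
      using False pne e3 by (simp add: nth_append)
    show ?thesis unfolding e e2 using assms(2) \<open>Suc (i - (length p - 1)) < length q\<close>
      by (simp add: walk_of_def)
  qed
qed

lemma walk_append_hd_last:
  assumes "walk_of F p" "walk_of F q" "last p = hd q"
  shows "hd (p @ tl q) = hd p" "last (p @ tl q) = last q" "length (p @ tl q) = length p + length q - 1"
proof -
  have pne: "p \<noteq> []" "q \<noteq> []" using assms by (auto simp: walk_of_def)
  show "hd (p @ tl q) = hd p" using pne by simp
  show "length (p @ tl q) = length p + length q - 1" using pne by (cases q) auto
  show "last (p @ tl q) = last q"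
  proof (cases "tl q = []")
    case True then show ?thesis using pne assms(3) by (cases q) auto
  next
    case False then show ?thesis using pne by (cases q) auto
  qed
qed

lemma gdist_le:
  assumes "walk_of F p" "hd p = x" "last p = y"
  shows "gdist F x y \<le> length p - 1"
proof -
  have "length p = Suc (length p - 1)" using assms(1) by (cases p) (auto simp: walk_of_def)
  then show ?thesis unfolding gdist_def using assms by (intro Least_le) blast
qed

lemma gdist_attain:
  assumes "\<exists>p. walk_of F p \<and> hd p = x \<and> last p = y"
  shows "\<exists>p. walk_of F p \<and> hd p = x \<and> last p = y \<and> length p = Suc (gdist F x y)"
proof -
  obtain p where p: "walk_of F p" "hd p = x" "last p = y" using assms by blast
  have "length p = Suc (length p - 1)" using p(1) by (cases p) (auto simp: walk_of_def)
  then have "\<exists>n p. walk_of F p \<and> hd p = x \<and> last p = y \<and> length p = Suc n" using p by blast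
  then show ?thesis unfolding gdist_def by (rule LeastI_ex)
qed

lemma gdist_refl: "gdist F x x = 0"
  using gdist_le[of F "[x]" x x] by simp

lemma gdist_triangle:
  assumes "\<exists>p. walk_of F p \<and> hd p = x \<and> last p = y" "\<exists>p. walk_of F p \<and> hd p = y \<and> last p = z"
  shows "gdist F x z \<le> gdist F x y + gdist F y z"
proof -
  obtain p where p: "walk_of F p" "hd p = x" "last p = y" "length p = Suc (gdist F x y)"
    using gdist_attain[OF assms(1)] by blast
  obtain q where q: "walk_of F q" "hd q = y" "last q = z" "length q = Suc (gdist F y z)"
    using gdist_attain[OF assms(2)] by blast
  have "gdist F x z \<le> length (p @ tl q) - 1"
    using walk_append[OF p(1) q(1)] walk_append_hd_last[OF p(1) q(1)] p q by (intro gdist_le) auto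
  then show ?thesis using p q by simp
qed

lemma gdist_sym:
  assumes "\<exists>p. walk_of F p \<and> hd p = x \<and> last p = y"
  shows "gdist F x y = gdist F y x"
proof -
  obtain p where p: "walk_of F p" "hd p = x" "last p = y" "length p = Suc (gdist F x y)"
    using gdist_attain[OF assms(1)] by blast
  have rp: "walk_of F (rev p)" "hd (rev p) = y" "last (rev p) = x"
    using p walk_rev by (auto simp: hd_rev last_rev)
  then obtain q where q: "walk_of F q" "hd q = y" "last q = x" "length q = Suc (gdist F y x)"
    using gdist_attain by blast
  have "gdist F y x \<le> gdist F x y" using gdist_le[OF rp] p by simp
  moreover have "gdist F x y \<le> gdist F y x" using gdist_le[OF walk_rev[OF q(1)]] q by (simp add: hd_rev last_rev)
  ultimately show ?thesis by simp
qed

lemma gdist_mono: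
  assumes "\<exists>p. walk_of F p \<and> hd p = x \<and> last p = y" "F \<subseteq> F'"
  shows "gdist F' x y \<le> gdist F x y"
proof -
  obtain p where p: "walk_of F p" "hd p = x" "last p = y" "length p = Suc (gdist F x y)"
    using gdist_attain[OF assms(1)] by blast
  show ?thesis using gdist_le[OF walk_mono[OF p(1) assms(2)] p(2,3)] p(4) by simp
qed

lemma walk_potential:
  fixes f :: "nat \<Rightarrow> int"
  assumes "\<And>a b. {a, b} \<in> F \<Longrightarrow> \<bar>f a - f b\<bar> \<le> 1" "walk_of F p"
  shows "\<bar>f (hd p) - f (last p)\<bar> \<le> int (length p) - 1"
  using assms(2)
proof (induction p)
  case Nil then show ?case by (simp add: walk_of_def)
next
  case (Cons a p)
  show ?case
  proof (cases p)
    case Nil then show ?thesis by simp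
  next
    case (Cons b r)
    have e: "{a, b} \<in> F" using Cons.prems Cons by (auto simp: walk_of_def)
    have "walk_of F p" using Cons.prems Cons unfolding walk_of_def
      by (metis Suc_less_eq length_Cons list.distinct(1) nth_Cons_Suc)
    then have "\<bar>f (hd p) - f (last p)\<bar> \<le> int (length p) - 1" by (rule Cons.IH)
    then show ?thesis using assms(1)[OF e] Cons by auto
  qed
qed

lemma gdist_potential:
  fixes f :: "nat \<Rightarrow> int"
  assumes "\<And>a b. {a, b} \<in> F \<Longrightarrow> \<bar>f a - f b\<bar> \<le> 1" "\<exists>p. walk_of F p \<and> hd p = x \<and> last p = y"
  shows "\<bar>f x - f y\<bar> \<le> int (gdist F x y)"
proof -
  obtain p where p: "walk_of F p" "hd p = x" "last p = y" "length p = Suc (gdist F x y)"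
    using gdist_attain[OF assms(2)] by blast
  show ?thesis using walk_potential[OF assms(1) p(1)] p by simp
qed

lemma walk_take: "walk_of F p \<Longrightarrow> 0 < n \<Longrightarrow> walk_of F (take n p)"
  unfolding walk_of_def by auto

lemma walk_drop: "walk_of F p \<Longrightarrow> n < length p \<Longrightarrow> walk_of F (drop n p)"
  unfolding walk_of_def by auto

lemma shortest_distinct:
  assumes "walk_of F p" "length p = Suc (gdist F (hd p) (last p))"
  shows "distinct p"
proof (rule ccontr)
  assume "\<not> distinct p"
  then obtain i j where ij: "i < j" "j < length p" "p ! i = p ! j"
    by (metis distinct_conv_nth linorder_neqE_nat)
  let ?a = "take (Suc i) p" and ?b = "drop j p"
  have wa: "walk_of F ?a" using walk_take[OF assms(1)] by simp
  have wb: "walk_of F ?b" using walk_drop[OF assms(1) ij(2)] .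
  have "?a = take i p @ [p ! i]" using ij by (simp add: take_Suc_conv_app_nth)
  then have "last ?a = p ! i" by simp
  then have l: "last ?a = hd ?b" using ij by (simp add: hd_drop_conv_nth)
  have "gdist F (hd p) (last p) \<le> length (?a @ tl ?b) - 1"
  proof (rule gdist_le[OF walk_append[OF wa wb l]])
    show "hd (?a @ tl ?b) = hd p" using assms(1) by (cases p) (auto simp: walk_of_def)
    show "last (?a @ tl ?b) = last p" using walk_append_hd_last(2)[OF wa wb l] ij by simp
  qed
  moreover have "length (?a @ tl ?b) = Suc i + (length p - j) - 1"
    using walk_append_hd_last(3)[OF wa wb l] ij by simp
  ultimately show False using assms(2) ij by simp
qed

definition conn :: "nat set set \<Rightarrow> nat set \<Rightarrow> bool" where
  "conn E V \<longleftrightarrow> (\<forall>x\<in>V. \<forall>y\<in>V. \<exists>p. walk_of E p \<and> hd p = x \<and> last p = y)"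

lemma conn_walk: "conn E V \<Longrightarrow> E \<subseteq> F \<Longrightarrow> x \<in> V \<Longrightarrow> y \<in> V \<Longrightarrow> \<exists>p. walk_of F p \<and> hd p = x \<and> last p = y"
  unfolding conn_def using walk_mono by blast

lemma swap:
  assumes F1: "F1 \<subseteq> F2 \<union> {{v, w}}" and va: "{v, a} \<in> F2" and c: "conn E V"
    and E1: "E \<subseteq> F1" and E2: "E \<subseteq> F2" and V: "v \<in> V" "w \<in> V" "a \<in> V" "x \<in> V" "y \<in> V"
  shows "gdist F2 x y \<le> gdist F1 x y + gdist E w a"
proof -
  have W2: "\<exists>p. walk_of F2 p \<and> hd p = s \<and> last p = t" if "s \<in> V" "t \<in> V" for s t
    using conn_walk[OF c E2 that] .
  obtain p where p: "walk_of F1 p" "hd p = x" "last p = y" "length p = Suc (gdist F1 x y)"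
    using gdist_attain[OF conn_walk[OF c E1 V(4,5)]] by blast
  have pne: "p \<noteq> []" using p(1) by (simp add: walk_of_def)
  have dp: "distinct p" using shortest_distinct[OF p(1)] p by simp
  have vw: "gdist F2 v w \<le> 1 + gdist E w a"
  proof -
    have "gdist F2 v w \<le> gdist F2 v a + gdist F2 a w" using W2 V by (intro gdist_triangle) auto
    moreover have "gdist F2 v a \<le> 1" using gdist_le[of F2 "[v, a]" v a] va by (simp add: walk_of_def)
    moreover have "gdist F2 a w \<le> gdist E a w" using conn_walk[OF c _ V(3) V(2)] E2 by (intro gdist_mono) auto
    moreover have "gdist E a w = gdist E w a" using conn_walk[OF c _ V(3) V(2)] by (intro gdist_sym) auto
    ultimately show ?thesis by simp
  qed
  show ?thesis
  proof (cases "\<exists>k. Suc k < length p \<and> {p ! k, p ! Suc k} = {v, w}")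
    case False
    have "walk_of F2 p" using p(1) False F1 unfolding walk_of_def by blast
    then show ?thesis using gdist_le[OF _ p(2,3)] p(4) by fastforce
  next
    case True
    then obtain k where k: "Suc k < length p" "{p ! k, p ! Suc k} = {v, w}" by blast
    have other: "{p ! l, p ! Suc l} \<noteq> {v, w}" if "Suc l < length p" "l \<noteq> k" for l
    proof
      assume "{p ! l, p ! Suc l} = {v, w}"
      then have e: "{p ! l, p ! Suc l} = {p ! k, p ! Suc k}" using k by simp
      have "p ! l = p ! k \<or> p ! l = p ! Suc k" using e by blast
      then have "l = Suc k" using nth_eq_iff_index_eq[OF dp] that k by auto
      moreover have "p ! Suc l = p ! k \<or> p ! Suc l = p ! Suc k" using e by blast
      then have "Suc l = k \<or> l = k" using nth_eq_iff_index_eq[OF dp] that k by auto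
      ultimately show False using that by simp
    qed
    have w1: "walk_of F2 (take (Suc k) p)"
      unfolding walk_of_def
    proof (intro conjI allI impI)
      show "take (Suc k) p \<noteq> []" using pne by simp
      fix l assume l: "Suc l < length (take (Suc k) p)"
      then have "{p ! l, p ! Suc l} \<in> F1" "{p ! l, p ! Suc l} \<noteq> {v, w}"
        using p(1) other[of l] k by (auto simp: walk_of_def)
      then show "{take (Suc k) p ! l, take (Suc k) p ! Suc l} \<in> F2" using F1 l by auto
    qed
    have w2: "walk_of F2 (drop (Suc k) p)"
      unfolding walk_of_def
    proof (intro conjI allI impI)
      show "drop (Suc k) p \<noteq> []" using k by simp
      fix l assume l: "Suc l < length (drop (Suc k) p)"
      then have "{p ! (Suc k + l), p ! Suc (Suc k + l)} \<in> F1" "{p ! (Suc k + l), p ! Suc (Suc k + l)} \<noteq> {v, w}"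
        using p(1) other[of "Suc k + l"] k by (auto simp: walk_of_def)
      then show "{drop (Suc k) p ! l, drop (Suc k) p ! Suc l} \<in> F2" using F1 l by auto
    qed
    have kv: "p ! k \<in> V" "p ! Suc k \<in> V" using k(2) V by (auto simp: doubleton_eq_iff)
    have d1: "gdist F2 x (p ! k) \<le> k"
      using gdist_le[OF w1] p(2) pne k by (simp add: hd_conv_nth last_conv_nth min_def)
    have d3: "gdist F2 (p ! Suc k) y \<le> length p - Suc k - 1"
      using gdist_le[OF w2] p(3) pne k by (simp add: hd_drop_conv_nth last_drop)
    have d2: "gdist F2 (p ! k) (p ! Suc k) \<le> 1 + gdist E w a"
    proof -
      have "(p ! k = v \<and> p ! Suc k = w) \<or> (p ! k = w \<and> p ! Suc k = v)" using k(2) by (auto simp: doubleton_eq_iff)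
      moreover have "gdist F2 w v = gdist F2 v w" using W2 V by (intro gdist_sym) auto
      ultimately show ?thesis using vw by auto
    qed
    have "gdist F2 x y \<le> gdist F2 x (p ! k) + gdist F2 (p ! k) y"
      using W2 V kv by (intro gdist_triangle) auto
    moreover have "gdist F2 (p ! k) y \<le> gdist F2 (p ! k) (p ! Suc k) + gdist F2 (p ! Suc k) y"
      using W2 V kv by (intro gdist_triangle) auto
    ultimately show ?thesis using d1 d2 d3 p(4) k by linarith
  qed
qed

lemma perturb:
  fixes c :: real
  assumes fin: "finite S" and cE: "conn E V"
    and V: "\<And>s. s \<in> S \<Longrightarrow> vv s \<in> V \<and> ww s \<in> V \<and> aa s \<in> V"
    and cb: "\<And>s. s \<in> S \<Longrightarrow> real (gdist E (ww s) (aa s)) \<le> c"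
    and xy: "x \<in> V" "y \<in> V"
  shows "\<bar>real (gdist (E \<union> (\<lambda>s. {vv s, ww s}) ` S) x y) - real (gdist (E \<union> (\<lambda>s. {vv s, aa s}) ` S) x y)\<bar>
     \<le> c * real (card S)"
proof -
  define G where "G T = E \<union> (\<lambda>s. {vv s, aa s}) ` T \<union> (\<lambda>s. {vv s, ww s}) ` (S - T)" for T
  have sym: "gdist E (aa s) (ww s) = gdist E (ww s) (aa s)" if "s \<in> S" for s
    using conn_walk[OF cE _] V[OF that] by (intro gdist_sym) auto
  have main: "finite T \<Longrightarrow> T \<subseteq> S \<Longrightarrow> \<bar>real (gdist (G {}) x y) - real (gdist (G T) x y)\<bar> \<le> c * real (card T)" for T
  proof (induction T rule: finite_subset_induct')
    case empty then show ?case by simp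
  next
    case (insert s T)
    note 3 = insert
    have fT: "finite T" using 3 by blast
    have a1: "G (insert s T) \<subseteq> G T \<union> {{vv s, aa s}}" unfolding G_def by auto
    have a2: "G T \<subseteq> G (insert s T) \<union> {{vv s, ww s}}" unfolding G_def by auto
    have b1: "{vv s, ww s} \<in> G T" using 3 unfolding G_def by auto
    have b2: "{vv s, aa s} \<in> G (insert s T)" unfolding G_def by auto
    have EG: "E \<subseteq> G U" for U unfolding G_def by auto
    have s1: "gdist (G T) x y \<le> gdist (G (insert s T)) x y + gdist E (aa s) (ww s)"
      by (rule swap[OF a1 b1 cE EG EG]) (use V 3 xy in auto)
    have s2: "gdist (G (insert s T)) x y \<le> gdist (G T) x y + gdist E (ww s) (aa s)"
      by (rule swap[OF a2 b2 cE EG EG]) (use V 3 xy in auto)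
    have "\<bar>real (gdist (G T) x y) - real (gdist (G (insert s T)) x y)\<bar> \<le> c"
      using s1 s2 sym[of s] cb[of s] 3 by auto
    then show ?case using 3 fT by (simp add: algebra_simps)
  qed
  have "G {} = E \<union> (\<lambda>s. {vv s, ww s}) ` S" "G S = E \<union> (\<lambda>s. {vv s, aa s}) ` S" unfolding G_def by auto
  then show ?thesis using main[OF fin] by simp
qed

lemma walk_Cons2: "walk_of F (a # b # r) \<longleftrightarrow> {a, b} \<in> F \<and> walk_of F (b # r)"
  unfolding walk_of_def
  apply (rule iffI)
   apply (metis Suc_less_eq length_Cons list.distinct(1) nth_Cons_0 nth_Cons_Suc zero_less_Suc)
  apply clarsimp
  subgoal for i by (cases i) auto
  done

lemma exists_step: "\<not> P (0::nat) \<Longrightarrow> P t \<Longrightarrow> \<exists>n<t. \<not> P n \<and> P (Suc n)"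
  by (induction t) (auto simp: less_Suc_eq)

locale dfs =
  fixes m :: nat and E :: "nat set set"
  assumes tree: "is_tree m E"
begin

abbreviation "V \<equiv> {1..m}"

definition OL where "OL i = odfs_O E i"
definition AS where "AS i = snd (odfs_state E i)"
definition vt where "vt i = hd (OL i)"
definition Nb where "Nb i = {w. {vt i, w} \<in> E \<and> w \<notin> AS i \<and> w \<notin> set (OL i)}"

lemma m1: "1 \<le> m" using tree by (simp add: is_tree_def)

lemma edgeV: assumes "{a, b} \<in> E" shows "a \<in> V" "b \<in> V" "a \<noteq> b"
proof -
  have "E \<subseteq> {{u, v} | u v. u \<noteq> v \<and> u \<in> V \<and> v \<in> V}" using tree by (simp add: is_tree_def)
  then obtain u v where "{a, b} = {u, v}" "u \<noteq> v" "u \<in> V" "v \<in> V" using assms by blast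
  then show "a \<in> V" "b \<in> V" "a \<noteq> b" by (auto simp: doubleton_eq_iff)
qed

lemma connE: "conn E V"
  using tree unfolding is_tree_def connected_on_def conn_def by blast

lemma vt_odfs: "odfs_v E i = vt i" by (simp add: odfs_v_def vt_def OL_def)

lemma finNb: "finite (Nb i)"
  by (rule finite_subset[of _ V]) (auto simp: Nb_def dest: edgeV)

lemma step:
  "OL (Suc i) = sorted_list_of_set (Nb i) @ tl (OL i)" "AS (Suc i) = insert (vt i) (AS i)"
proof -
  obtain Os A where st: "odfs_state E i = (Os, A)" by (cases "odfs_state E i")
  have "odfs_state E (Suc i) = odfs_step E (odfs_state E i)" by (simp add: odfs_state_def)
  then show "OL (Suc i) = sorted_list_of_set (Nb i) @ tl (OL i)" "AS (Suc i) = insert (vt i) (AS i)"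
    using st by (simp_all add: odfs_step_def Let_def OL_def odfs_O_def AS_def vt_def Nb_def)
qed

lemma OL0: "OL 0 = [1]" and AS0: "AS 0 = {}"
  by (simp_all add: OL_def AS_def odfs_O_def odfs_state_def)

lemma vt0: "vt 0 = 1" by (simp add: vt_def OL0)

definition Inv where "Inv i \<longleftrightarrow> distinct (OL i) \<and> set (OL i) \<inter> AS i = {} \<and> set (OL i) \<subseteq> V \<and> AS i \<subseteq> V
   \<and> AS i = vt ` {..<i} \<and> (\<forall>a\<in>AS i. \<forall>w. {a, w} \<in> E \<longrightarrow> w \<in> AS i \<union> set (OL i)) \<and> 1 \<in> AS i \<union> set (OL i)"

lemma closure:
  assumes "1 \<in> S" "\<And>a w. a \<in> S \<Longrightarrow> {a, w} \<in> E \<Longrightarrow> w \<in> S"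
  shows "V \<subseteq> S"
proof
  fix u assume u: "u \<in> V"
  have "1 \<in> V" using m1 by simp
  then obtain p where p: "walk_of E p" "hd p = 1" "last p = u" using connE u unfolding conn_def by blast
  have "\<forall>k<length p. p ! k \<in> S"
  proof (intro allI impI)
    fix k assume "k < length p" then show "p ! k \<in> S"
    proof (induction k)
      case 0 then show ?case using p assms(1) by (cases p) auto
    next
      case (Suc k)
      then have "{p ! k, p ! Suc k} \<in> E" using p(1) by (simp add: walk_of_def)
      then show ?case using Suc assms(2) by simp
    qed
  qed
  then show "u \<in> S" using p by (metis last_conv_nth walk_of_def diff_less length_greater_0_conv zero_less_one)
qed

lemma Inv0: "Inv 0" using m1 by (simp add: Inv_def OL0 AS0)

lemma Inv_ne: assumes "Inv i" "i < m" shows "OL i \<noteq> []"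
proof
  assume e: "OL i = []"
  have "V \<subseteq> AS i" using assms(1) e by (intro closure) (auto simp: Inv_def)
  then have "card V \<le> card (AS i)" by (intro card_mono) (use assms(1) in \<open>auto simp: Inv_def\<close>)
  also have "\<dots> \<le> i" using assms(1) card_image_le[of "{..<i}" vt] by (simp add: Inv_def)
  finally show False using assms(2) by simp
qed

lemma Inv_Suc: assumes I: "Inv i" and ne: "OL i \<noteq> []" shows "Inv (Suc i)"
proof -
  have vi: "vt i \<in> set (OL i)" using ne by (simp add: vt_def)
  have sO: "set (OL i) = insert (vt i) (set (tl (OL i)))" using ne by (cases "OL i") (auto simp: vt_def)
  have dO: "distinct (OL i)" using I by (simp add: Inv_def)
  have dtl: "distinct (tl (OL i))" "vt i \<notin> set (tl (OL i))"
    using dO ne by (cases "OL i", simp, simp add: vt_def)+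
  have sN: "set (sorted_list_of_set (Nb i)) = Nb i" "distinct (sorted_list_of_set (Nb i))" using finNb by auto
  have NbV: "Nb i \<subseteq> V" by (auto simp: Nb_def dest: edgeV)
  show ?thesis unfolding Inv_def step
  proof (intro conjI)
    show "distinct (sorted_list_of_set (Nb i) @ tl (OL i))" using sN dtl sO by (auto simp: Nb_def)
    show "set (sorted_list_of_set (Nb i) @ tl (OL i)) \<inter> insert (vt i) (AS i) = {}"
    proof -
      have "Nb i \<inter> AS i = {}" "vt i \<notin> Nb i" "set (tl (OL i)) \<inter> AS i = {}"
        using vi sO I unfolding Nb_def Inv_def by auto
      then show ?thesis using sN(1) dtl(2) by auto
    qed
    show "set (sorted_list_of_set (Nb i) @ tl (OL i)) \<subseteq> V" using sN NbV I sO by (auto simp: Inv_def)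
    show "insert (vt i) (AS i) \<subseteq> V" using I vi by (auto simp: Inv_def)
    show "insert (vt i) (AS i) = vt ` {..<Suc i}" using I by (auto simp: Inv_def lessThan_Suc)
    show "\<forall>a\<in>insert (vt i) (AS i). \<forall>w. {a, w} \<in> E \<longrightarrow> w \<in> insert (vt i) (AS i) \<union> set (sorted_list_of_set (Nb i) @ tl (OL i))"
    proof (intro ballI allI impI)
      fix a w assume a: "a \<in> insert (vt i) (AS i)" and e: "{a, w} \<in> E"
      have cl: "\<forall>a\<in>AS i. \<forall>w. {a, w} \<in> E \<longrightarrow> w \<in> AS i \<union> set (OL i)" using I unfolding Inv_def by blast
      have "w \<in> AS i \<union> set (OL i) \<or> w \<in> Nb i"
      proof (cases "a = vt i")
        case True then show ?thesis using e by (auto simp: Nb_def)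
      next
        case False then show ?thesis using a e cl by blast
      qed
      then show "w \<in> insert (vt i) (AS i) \<union> set (sorted_list_of_set (Nb i) @ tl (OL i))"
        using sO sN(1) by auto
    qed
    show "1 \<in> insert (vt i) (AS i) \<union> set (sorted_list_of_set (Nb i) @ tl (OL i))"
      using I sO by (auto simp: Inv_def)
  qed
qed

lemma Inv: "i \<le> m \<Longrightarrow> Inv i"
proof (induction i)
  case 0 show ?case by (rule Inv0)
next
  case (Suc i) then show ?case using Inv_Suc Inv_ne by simp
qed

lemma OL_ne: "i < m \<Longrightarrow> OL i \<noteq> []" using Inv Inv_ne by simp

lemma InvD: assumes "i \<le> m"
  shows "distinct (OL i)" "set (OL i) \<inter> AS i = {}" "set (OL i) \<subseteq> V" "AS i \<subseteq> V"
   "AS i = vt ` {..<i}" "\<And>a w. a \<in> AS i \<Longrightarrow> {a, w} \<in> E \<Longrightarrow> w \<in> AS i \<union> set (OL i)"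
   "1 \<in> AS i \<union> set (OL i)"
  using Inv[OF assms] unfolding Inv_def by blast+

lemma vt_facts: assumes "i < m" shows "vt i \<in> set (OL i)" "vt i \<in> V" "vt i \<notin> AS i"
proof -
  show "vt i \<in> set (OL i)" using OL_ne[OF assms] by (simp add: vt_def)
  then show "vt i \<in> V" "vt i \<notin> AS i" using InvD(2,3)[of i] assms by auto
qed

lemma vt_inj: "inj_on vt {..<m}"
proof (rule inj_onI)
  fix i j assume ij: "i \<in> {..<m}" "j \<in> {..<m}" "vt i = vt j"
  show "i = j"
  proof (rule ccontr)
    assume "i \<noteq> j"
    then consider "i < j" | "j < i" by linarith
    then show False
    proof cases
      case 1 then have "vt i \<in> AS j" using InvD(5)[of j] ij by (metis image_eqI lessThan_iff less_imp_le_nat)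
      then show False using vt_facts(3)[of j] ij by simp
    next
      case 2 then have "vt j \<in> AS i" using InvD(5)[of i] ij by (metis image_eqI lessThan_iff less_imp_le_nat)
      then show False using vt_facts(3)[of i] ij by simp
    qed
  qed
qed

lemma vt_img: "vt ` {..<m} = V"
proof -
  have "vt ` {..<m} \<subseteq> V" using vt_facts by auto
  moreover have "card (vt ` {..<m}) = card V" using card_image[OF vt_inj] by simp
  ultimately show ?thesis by (intro card_subset_eq) auto
qed

definition tau where "tau x = inv_into {..<m} vt x"

lemma tau: assumes "x \<in> V" shows "tau x < m" "vt (tau x) = x"
  using assms vt_img unfolding tau_def
  by (metis inv_into_into lessThan_iff, metis f_inv_into_f)

lemma tau_vt: "i < m \<Longrightarrow> tau (vt i) = i"
  unfolding tau_def using vt_inj by (simp add: inv_into_f_f)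

lemma tau1: "tau 1 = 0" using tau_vt[of 0] m1 vt0 by simp

lemma mono_step: assumes "i < m" shows "AS i \<union> set (OL i) \<subseteq> AS (Suc i) \<union> set (OL (Suc i))"
proof -
  have ne: "OL i \<noteq> []" using OL_ne assms by simp
  have sO: "set (OL i) = insert (vt i) (set (tl (OL i)))" using ne by (cases "OL i") (auto simp: vt_def)
  show ?thesis unfolding step using sO by auto
qed

lemma mono: "i \<le> j \<Longrightarrow> j \<le> m \<Longrightarrow> AS i \<union> set (OL i) \<subseteq> AS j \<union> set (OL j)"
proof (induction j rule: dec_induct)
  case base then show ?case by simp
next
  case (step j) then show ?case using mono_step[of j] by auto
qed

lemma Nb_facts: assumes "i < m" "x \<in> Nb i"
  shows "x \<in> set (OL (Suc i))" "x \<notin> AS i \<union> set (OL i)" "{vt i, x} \<in> E" "x \<in> V" "x \<noteq> 1"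
proof -
  show "x \<in> set (OL (Suc i))" using assms finNb by (simp add: step)
  show "x \<notin> AS i \<union> set (OL i)" "{vt i, x} \<in> E" using assms by (auto simp: Nb_def)
  then show "x \<in> V" by (auto dest: edgeV)
  show "x \<noteq> 1" using InvD(7)[of i] assms \<open>x \<notin> AS i \<union> set (OL i)\<close> by auto
qed

lemma Nb_unique: assumes "i < m" "j < m" "x \<in> Nb i" "x \<in> Nb j" shows "i = j"
proof (rule ccontr)
  assume "i \<noteq> j"
  then consider "i < j" | "j < i" by linarith
  then show False
  proof cases
    case 1
    then have "x \<in> AS j \<union> set (OL j)" using mono[of "Suc i" j] Nb_facts(1)[OF assms(1,3)] assms by auto
    then show False using Nb_facts(2)[OF assms(2,4)] by simp
  next
    case 2
    then have "x \<in> AS i \<union> set (OL i)" using mono[of "Suc j" i] Nb_facts(1)[OF assms(2,4)] assms by auto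
    then show False using Nb_facts(2)[OF assms(1,3)] by simp
  qed
qed

lemma Nb_exists: assumes "x \<in> V" "x \<noteq> 1" shows "\<exists>n<tau x. x \<in> Nb n"
proof -
  have "x \<in> set (OL (tau x))" using vt_facts(1)[OF tau(1)[OF assms(1)]] tau(2)[OF assms(1)] by simp
  moreover have "x \<notin> set (OL 0)" using assms by (simp add: OL0)
  ultimately obtain n where n: "n < tau x" "x \<notin> set (OL n)" "x \<in> set (OL (Suc n))"
    using exists_step[of "\<lambda>n. x \<in> set (OL n)"] by blast
  have "set (tl (OL n)) \<subseteq> set (OL n)" by (cases "OL n") auto
  then have "x \<in> Nb n" using n finNb by (auto simp: step)
  then show ?thesis using n by blast
qed

definition pi where "pi x = (THE n. n < m \<and> x \<in> Nb n)"
definition par where "par x = vt (pi x)"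

lemma pi: assumes "x \<in> V" "x \<noteq> 1" shows "pi x < m" "x \<in> Nb (pi x)" "pi x < tau x"
proof -
  obtain n where n: "n < tau x" "x \<in> Nb n" using Nb_exists[OF assms] by blast
  have nm: "n < m" using n tau[OF assms(1)] by simp
  have "pi x = n" unfolding pi_def
    by (rule the_equality) (use n nm Nb_unique in auto)
  then show "pi x < m" "x \<in> Nb (pi x)" "pi x < tau x" using n nm by auto
qed

lemma pi_eq: assumes "i < m" "x \<in> Nb i" shows "pi x = i" "par x = vt i"
proof -
  have x: "x \<in> V" "x \<noteq> 1" using Nb_facts[OF assms] by auto
  show "pi x = i" using Nb_unique[OF pi(1)[OF x] assms(1) pi(2)[OF x] assms(2)] .
  then show "par x = vt i" by (simp add: par_def)
qed

lemma par: assumes "x \<in> V" "x \<noteq> 1" shows "{par x, x} \<in> E" "par x \<in> V" "tau (par x) = pi x" "tau (par x) < tau x"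
proof -
  show e: "{par x, x} \<in> E" using Nb_facts(3)[OF pi(1,2)[OF assms]] by (simp add: par_def)
  then show "par x \<in> V" by (auto dest: edgeV)
  show "tau (par x) = pi x" using tau_vt[OF pi(1)[OF assms]] by (simp add: par_def)
  then show "tau (par x) < tau x" using pi(3)[OF assms] by simp
qed

end

context dfs begin

function dt :: "nat \<Rightarrow> nat" where
  "dt i = (if i = 0 then 0 else if pi (vt i) < i then Suc (dt (pi (vt i))) else 0)"
  by auto
termination by (relation "measure id") auto

declare dt.simps[simp del]

definition dep where "dep x = dt (tau x)"

lemma dt0: "dt 0 = 0" by (subst dt.simps) simp

lemma dep1: "dep 1 = 0" unfolding dep_def tau1 by (rule dt0)

lemma tau_ne0: assumes "x \<in> V" "x \<noteq> 1" shows "tau x \<noteq> 0"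
proof
  assume "tau x = 0"
  then have "x = vt 0" using tau(2)[OF assms(1)] by simp
  then show False using vt0 assms(2) by simp
qed

lemma dep_par: assumes "x \<in> V" "x \<noteq> 1" shows "dep x = Suc (dep (par x))"
proof -
  have "dt (tau x) = Suc (dt (pi x))"
    using tau_ne0[OF assms] tau(2)[OF assms(1)] pi(3)[OF assms] by (subst dt.simps) simp
  then show ?thesis using par(3)[OF assms] by (simp add: dep_def)
qed

lemma dep0: "x \<in> V \<Longrightarrow> dep x = 0 \<Longrightarrow> x = 1"
proof (rule ccontr)
  assume "x \<in> V" "dep x = 0" "x \<noteq> 1"
  then show False using dep_par[of x] by simp
qed

definition PE where "PE = {{par x, x} | x. x \<in> V \<and> x \<noteq> 1}"

lemma walk_to_root: assumes "x \<in> V" "\<And>y. y \<in> V \<Longrightarrow> y \<noteq> 1 \<Longrightarrow> {par y, y} \<in> F"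
  shows "\<exists>p. walk_of F p \<and> hd p = x \<and> last p = 1"
proof -
  have "\<forall>x\<in>V. dep x = n \<longrightarrow> (\<exists>p. walk_of F p \<and> hd p = x \<and> last p = 1)" for n
  proof (induction n)
    case 0 show ?case
    proof (intro ballI impI)
      fix x assume "x \<in> V" "dep x = 0"
      then have "x = 1" by (rule dep0)
      then show "\<exists>p. walk_of F p \<and> hd p = x \<and> last p = 1" by (intro exI[of _ "[1]"]) simp
    qed
  next
    case (Suc n)
    show ?case
    proof (intro ballI impI)
      fix x assume x: "x \<in> V" "dep x = Suc n"
      then have x1: "x \<noteq> 1" using dep1 by auto
      then obtain p where p: "walk_of F p" "hd p = par x" "last p = 1"
        using Suc x dep_par[OF x(1) x1] par(2)[OF x(1) x1] by auto
      obtain r where r: "p = par x # r" using p(1,2) by (cases p) (auto simp: walk_of_def)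
      have "walk_of F (x # p)"
        using p(1) assms(2)[OF x(1) x1] unfolding r by (simp add: walk_Cons2 insert_commute)
      then show "\<exists>p. walk_of F p \<and> hd p = x \<and> last p = 1" using p
        by (intro exI[of _ "x # p"]) (auto simp: walk_of_def)
    qed
  qed
  then show ?thesis using assms(1) by blast
qed

lemma E_PE: "E \<subseteq> PE"
proof
  fix e assume e: "e \<in> E"
  show "e \<in> PE"
  proof (rule ccontr)
    assume ne: "e \<notin> PE"
    have sub: "{par y, y} \<in> E - {e}" if y: "y \<in> V" "y \<noteq> 1" for y
    proof -
      have "{par y, y} \<in> PE" unfolding PE_def using y by blast
      then show ?thesis using ne par(1)[OF y] by auto
    qed
    have "connected_on V (E - {e})"
      unfolding connected_on_def
    proof (intro ballI)
      fix u w assume uw: "u \<in> V" "w \<in> V"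
      obtain p where p: "walk_of (E - {e}) p" "hd p = u" "last p = 1" using walk_to_root[OF uw(1) sub] by blast
      obtain q where q: "walk_of (E - {e}) q" "hd q = w" "last q = 1" using walk_to_root[OF uw(2) sub] by blast
      have rq: "walk_of (E - {e}) (rev q)" "hd (rev q) = 1" "last (rev q) = w"
        using q walk_rev by (auto simp: hd_rev last_rev)
      show "\<exists>p. walk_of (E - {e}) p \<and> hd p = u \<and> last p = w"
        using walk_append[OF p(1) rq(1)] walk_append_hd_last[OF p(1) rq(1)] p rq by auto
    qed
    moreover have "\<forall>e\<in>E. \<not> connected_on V (E - {e})" using tree by (simp add: is_tree_def)
    ultimately show False using e by blast
  qed
qed

lemma edge_cases: assumes "{a, b} \<in> E"
  shows "(a \<in> V \<and> a \<noteq> 1 \<and> b = par a) \<or> (b \<in> V \<and> b \<noteq> 1 \<and> a = par b)"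
proof -
  have "{a, b} \<in> PE" using E_PE assms by blast
  then obtain x where x: "{a, b} = {par x, x}" "x \<in> V" "x \<noteq> 1" unfolding PE_def by blast
  then have "(a = par x \<and> b = x) \<or> (a = x \<and> b = par x)" by (simp add: doubleton_eq_iff)
  then show ?thesis using x(2,3) by blast
qed

lemma edge_dep: assumes "{a, b} \<in> E" shows "\<bar>int (dep a) - int (dep b)\<bar> \<le> 1"
proof -
  consider "a \<in> V" "a \<noteq> 1" "b = par a" | "b \<in> V" "b \<noteq> 1" "a = par b" using edge_cases[OF assms] by blast
  then show ?thesis
  proof cases
    case 1 then have "dep a = Suc (dep b)" using dep_par[of a] by simp
    then show ?thesis by simp
  next
    case 2 then have "dep b = Suc (dep a)" using dep_par[of b] by simp
    then show ?thesis by simp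
  qed
qed

definition anc where "anc a x \<longleftrightarrow> x \<in> V \<and> (\<exists>n\<le>dep x. a = (par ^^ n) x)"
definition ad where "ad x d = (par ^^ (dep x - d)) x"

lemma iter: assumes "x \<in> V" "n \<le> dep x" shows "(par ^^ n) x \<in> V" "dep ((par ^^ n) x) = dep x - n"
proof -
  have "(par ^^ n) x \<in> V \<and> dep ((par ^^ n) x) = dep x - n" using assms(2)
  proof (induction n)
    case 0 then show ?case using assms(1) by simp
  next
    case (Suc n)
    let ?y = "(par ^^ n) x"
    have y: "?y \<in> V" "dep ?y = dep x - n" using Suc by auto
    then have y1: "?y \<noteq> 1" using Suc.prems dep1 by auto
    show ?case using par(2)[OF y(1) y1] dep_par[OF y(1) y1] y Suc.prems by simp
  qed
  then show "(par ^^ n) x \<in> V" "dep ((par ^^ n) x) = dep x - n" by auto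
qed

lemma anc_refl: "x \<in> V \<Longrightarrow> anc x x" unfolding anc_def by (auto intro: exI[of _ 0])

lemma ancD: assumes "anc a x" shows "a \<in> V" "x \<in> V" "dep a \<le> dep x" "a = ad x (dep a)"
proof -
  obtain n where n: "x \<in> V" "n \<le> dep x" "a = (par ^^ n) x" using assms unfolding anc_def by blast
  show "a \<in> V" "x \<in> V" "dep a \<le> dep x" using iter[OF n(1,2)] n by auto
  have "dep x - dep a = n" using iter[OF n(1,2)] n by simp
  then show "a = ad x (dep a)" using n by (simp add: ad_def)
qed

lemma ad: assumes "x \<in> V" "d \<le> dep x" shows "anc (ad x d) x" "dep (ad x d) = d"
proof -
  show "dep (ad x d) = d" using iter[OF assms(1), of "dep x - d"] assms unfolding ad_def by auto
  show "anc (ad x d) x" using assms unfolding anc_def ad_def by (intro conjI exI[of _ "dep x - d"]) auto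
qed

lemma ad_self: "x \<in> V \<Longrightarrow> ad x (dep x) = x" by (simp add: ad_def)

lemma anc_trans: assumes "anc a b" "anc b c" shows "anc a c"
proof -
  obtain n where n: "b \<in> V" "n \<le> dep b" "a = (par ^^ n) b" using assms(1) unfolding anc_def by blast
  obtain n' where n': "c \<in> V" "n' \<le> dep c" "b = (par ^^ n') c" using assms(2) unfolding anc_def by blast
  have "dep b = dep c - n'" using iter[OF n'(1,2)] n' by simp
  then have "n + n' \<le> dep c" using n n' by simp
  moreover have "a = (par ^^ (n + n')) c" using n n' by (simp add: funpow_add)
  ultimately show ?thesis using n' unfolding anc_def by blast
qed

lemma anc_eq: "anc a x \<Longrightarrow> anc b x \<Longrightarrow> dep a = dep b \<Longrightarrow> a = b"
  using ancD(4) by metis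

lemma anc_total: assumes "anc a x" "anc b x" "dep a \<le> dep b" shows "anc a b"
proof -
  have x: "x \<in> V" and db: "dep b \<le> dep x" using ancD[OF assms(2)] by auto
  have a: "a = (par ^^ (dep x - dep a)) x" using ancD(4)[OF assms(1)] by (simp add: ad_def)
  have b: "b = (par ^^ (dep x - dep b)) x" using ancD(4)[OF assms(2)] by (simp add: ad_def)
  have "dep x - dep a = (dep b - dep a) + (dep x - dep b)" using assms(3) db by simp
  then have "a = (par ^^ (dep b - dep a)) b" using a b by (simp add: funpow_add)
  then show ?thesis using ancD(1)[OF assms(2)] unfolding anc_def by (intro conjI exI[of _ "dep b - dep a"]) auto
qed

lemma anc_par: assumes "x \<in> V" "x \<noteq> 1" shows "anc (par x) x"
  using dep_par[OF assms] assms unfolding anc_def by (intro conjI exI[of _ 1]) auto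

lemma anc_cases: assumes "x \<in> V" "x \<noteq> 1" "anc a x" shows "a = x \<or> anc a (par x)"
proof -
  obtain n where n: "n \<le> dep x" "a = (par ^^ n) x" using assms(3) unfolding anc_def by blast
  show ?thesis
  proof (cases n)
    case 0 then show ?thesis using n by simp
  next
    case (Suc k)
    then have "a = (par ^^ k) (par x)" using n by (simp add: funpow_Suc_right del: funpow.simps)
    moreover have "k \<le> dep (par x)" using dep_par[OF assms(1,2)] n Suc by simp
    ultimately show ?thesis using par(2)[OF assms(1,2)] unfolding anc_def by blast
  qed
qed

lemma ad_same: assumes "anc b x" "d \<le> dep b" shows "ad x d = ad b d"
proof -
  have "anc (ad b d) x" using anc_trans[OF ad(1)[OF ancD(1)[OF assms(1)] assms(2)] assms(1)] .
  moreover have "anc (ad x d) x" using ad(1)[OF ancD(2)[OF assms(1)]] ancD(3)[OF assms(1)] assms(2) by simp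
  moreover have "dep (ad x d) = dep (ad b d)"
    using ad(2)[OF ancD(1)[OF assms(1)] assms(2)] ad(2)[OF ancD(2)[OF assms(1)]] ancD(3)[OF assms(1)] assms(2) by simp
  ultimately show ?thesis using anc_eq by blast
qed

lemma anc_walk: assumes "anc a x"
  shows "\<exists>p. walk_of E p \<and> hd p = x \<and> last p = a \<and> length p = Suc (dep x - dep a)"
proof -
  define n where "n = dep x - dep a"
  have x: "x \<in> V" and an: "a = (par ^^ n) x" using ancD[OF assms] by (auto simp: ad_def n_def)
  have nle: "n \<le> dep x" by (simp add: n_def)
  define p where "p = map (\<lambda>k. (par ^^ k) x) [0..<Suc n]"
  have "walk_of E p" unfolding walk_of_def
  proof (intro conjI allI impI)
    show "p \<noteq> []" by (simp add: p_def)
    fix k assume k: "Suc k < length p"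
    then have kn: "k < n" by (simp add: p_def)
    let ?y = "(par ^^ k) x"
    have y: "?y \<in> V" "dep ?y = dep x - k" using iter[OF x] kn nle by auto
    then have y1: "?y \<noteq> 1" using kn nle dep1 by auto
    have "{?y, par ?y} \<in> E" using par(1)[OF y(1) y1] by (simp add: insert_commute)
    then show "{p ! k, p ! Suc k} \<in> E" using kn by (simp add: p_def nth_append del: upt_Suc)
  qed
  moreover have "hd p = x" by (simp add: p_def hd_map del: upt_Suc)
  moreover have "last p = a" using an by (simp add: p_def last_map del: upt_Suc)
  moreover have "length p = Suc n" by (simp add: p_def)
  ultimately show ?thesis unfolding n_def by blast
qed

lemma gdist_E_pot: assumes "x \<in> V" "y \<in> V" shows "\<bar>int (dep x) - int (dep y)\<bar> \<le> int (gdist E x y)"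
  using gdist_potential[of E "\<lambda>z. int (dep z)", OF edge_dep] conn_walk[OF connE _ assms] by auto

lemma gdist_anc: assumes "anc a x" shows "gdist E x a = dep x - dep a" "gdist E a x = dep x - dep a"
proof -
  obtain p where p: "walk_of E p" "hd p = x" "last p = a" "length p = Suc (dep x - dep a)"
    using anc_walk[OF assms] by blast
  have V: "a \<in> V" "x \<in> V" and le: "dep a \<le> dep x" using ancD[OF assms] by auto
  have "gdist E x a \<le> dep x - dep a" using gdist_le[OF p(1-3)] p(4) by simp
  moreover have "int (dep x - dep a) \<le> int (gdist E x a)" using gdist_E_pot[OF V(2,1)] le by simp
  ultimately show "gdist E x a = dep x - dep a" by simp
  moreover have "gdist E x a = gdist E a x" using conn_walk[OF connE _ V(2,1)] by (intro gdist_sym) auto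
  ultimately show "gdist E a x = dep x - dep a" by simp
qed

lemma anc_root: "x \<in> V \<Longrightarrow> anc 1 x"
proof -
  assume x: "x \<in> V"
  have "ad x 0 = 1" using ad[OF x, of 0] ancD(1)[OF ad(1)[OF x, of 0]] dep0 by simp
  then show "anc 1 x" using ad(1)[OF x, of 0] by simp
qed

lemma gdist_root: "x \<in> V \<Longrightarrow> gdist E 1 x = dep x"
  using gdist_anc(2)[OF anc_root] dep1 by simp

lemma walk_up: "walk_of E p \<Longrightarrow> hd p = w \<Longrightarrow> last p = x \<Longrightarrow> w \<in> V \<Longrightarrow> x \<in> V \<Longrightarrow> dep w \<le> dep x \<Longrightarrow>
   length p = Suc (dep x - dep w) \<Longrightarrow> anc w x"
proof (induction p arbitrary: w)
  case Nil then show ?case by (simp add: walk_of_def)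
next
  case (Cons c p)
  show ?case
  proof (cases "p = []")
    case True then show ?thesis using Cons anc_refl by simp
  next
    case False
    then obtain b r where Cons2: "p = b # r" by (cases p) auto
    have e: "{w, b} \<in> E" and wp: "walk_of E p" using Cons.prems Cons2 by (auto simp: walk_Cons2)
    have bV: "b \<in> V" using edgeV(2)[OF e] .
    have pot: "\<bar>int (dep b) - int (dep x)\<bar> \<le> int (length p) - 1"
      using walk_potential[of E "\<lambda>z. int (dep z)", OF edge_dep wp] Cons.prems Cons2 by auto
    have "length p = dep x - dep w" using Cons.prems by simp
    then have db: "dep b \<ge> Suc (dep w)" using pot Cons.prems Cons2 by auto
    then have "w = par b" "b \<noteq> 1" using edge_cases[OF e] dep_par Cons.prems by auto
    then have a1: "anc w b" using anc_par[OF bV] by simp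
    have "anc b x" using Cons.IH[OF wp _ _ bV] Cons.prems Cons2 db edge_dep[OF e] \<open>length p = dep x - dep w\<close>
      by auto
    then show ?thesis using anc_trans[OF a1] by blast
  qed
qed

lemma tree_anc_eq: assumes "x \<in> V" "d \<le> dep x" shows "tree_anc m E x d = ad x d"
  unfolding tree_anc_def
proof (rule the_equality)
  have a: "anc (ad x d) x" "dep (ad x d) = d" using ad[OF assms] by auto
  show "ad x d \<in> V \<and> gdist E 1 (ad x d) = d \<and> gdist E 1 (ad x d) + gdist E (ad x d) x = gdist E 1 x"
    using a ancD[OF a(1)] gdist_root gdist_anc(2)[OF a(1)] assms by auto
next
  fix w assume w: "w \<in> V \<and> gdist E 1 w = d \<and> gdist E 1 w + gdist E w x = gdist E 1 x"
  then have dw: "dep w = d" and g: "gdist E w x = dep x - d" using gdist_root assms by auto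
  obtain p where p: "walk_of E p" "hd p = w" "last p = x" "length p = Suc (gdist E w x)"
    using gdist_attain[OF conn_walk[OF connE _ _ assms(1)]] w by blast
  have "anc w x" using walk_up[OF p(1-3)] w assms dw g p(4) by auto
  then show "w = ad x d" using ancD(4) dw by metis
qed

end

context dfs begin

lemma OL_nth: assumes "i < m" "0 < k" "k < length (OL i)"
  shows "OL i ! k \<in> V" "OL i ! k \<noteq> 1" "OL i ! k \<noteq> vt i"
proof -
  have inset: "OL i ! k \<in> set (OL i)" using assms by simp
  moreover have "set (OL i) \<subseteq> V" using InvD(3)[of i] assms by simp
  ultimately show "OL i ! k \<in> V" by (rule subsetD[rotated])
  show "OL i ! k \<noteq> vt i"
    using nth_eq_iff_index_eq[OF InvD(1)[of i], of k 0] assms OL_ne[OF assms(1)]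
    by (simp add: vt_def hd_conv_nth)
  show "OL i ! k \<noteq> 1"
  proof (cases i)
    case 0 then show ?thesis using assms by (simp add: OL0)
  next
    case (Suc i')
    then have "1 \<in> AS i" using InvD(5)[of i] assms vt0 by (metis image_eqI lessThan_iff zero_less_Suc less_imp_le_nat)
    then show ?thesis using InvD(2)[of i] assms inset by (metis IntI empty_iff less_imp_le_nat)
  qed
qed

definition Pinv where "Pinv i \<longleftrightarrow> (\<forall>k. 0 < k \<and> k < length (OL i) \<longrightarrow>
   anc (par (OL i ! k)) (vt i) \<and> dep (par (OL i ! k)) < dep (vt i) \<and>
   length (OL i) - k + 1 \<le> length (OL (tau (ad (vt i) (Suc (dep (par (OL i ! k))))))) \<and>
   length (OL (tau (par (OL i ! k)))) \<le> length (OL i) - k)"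

definition Minv where "Minv i \<longleftrightarrow> (\<forall>a b. anc a b \<longrightarrow> anc b (vt i) \<longrightarrow> length (OL (tau a)) \<le> length (OL (tau b)))"

lemma PM0: "Pinv 0" "Minv 0"
proof -
  show "Pinv 0" unfolding Pinv_def by (simp add: OL0)
  show "Minv 0" unfolding Minv_def
  proof (intro allI impI)
    fix a b assume ab: "anc a b" "anc b (vt 0)"
    have "dep b = 0" using ancD(3)[OF ab(2)] vt0 dep1 by simp
    then have "b = 1" using dep0 ancD(1)[OF ab(2)] by blast
    moreover have "dep a = 0" using ancD(3)[OF ab(1)] \<open>dep b = 0\<close> by simp
    then have "a = 1" using dep0 ancD(1)[OF ab(1)] by blast
    ultimately show "length (OL (tau a)) \<le> length (OL (tau b))" by simp
  qed
qed

lemma PM_Suc: assumes i: "Suc i < m" and P: "Pinv i" and M: "Minv i"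
  shows "Pinv (Suc i) \<and> Minv (Suc i)"
proof -
  have im: "i < m" using i by simp
  define N where "N = sorted_list_of_set (Nb i)"
  define L where "L = length (OL i)"
  have sN: "set N = Nb i" using finNb by (simp add: N_def)
  have OS: "OL (Suc i) = N @ tl (OL i)" by (simp add: step N_def)
  have L1: "1 \<le> L" using OL_ne[OF im] unfolding L_def by (cases "OL i") auto
  have lenS: "length (OL (Suc i)) = length N + L - 1" using OS L1 by (simp add: L_def)
  have viV: "vt i \<in> V" using vt_facts[OF im] by simp
  have tvi: "tau (vt i) = i" using tau_vt[OF im] .
  have tvS: "tau (vt (Suc i)) = Suc i" using tau_vt[OF i] .
  have PD: "anc (par (OL i ! k)) (vt i) \<and> dep (par (OL i ! k)) < dep (vt i) \<and>
   L - k + 1 \<le> length (OL (tau (ad (vt i) (Suc (dep (par (OL i ! k))))))) \<and>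
   length (OL (tau (par (OL i ! k)))) \<le> L - k" if "0 < k" "k < L" for k
    using P that unfolding Pinv_def L_def by blast
  have MD: "length (OL (tau a)) \<le> length (OL (tau b))" if "anc a b" "anc b (vt i)" for a b
    using M that unfolding Minv_def by blast
  show ?thesis
  proof (cases "N = []")
    case False
    have Nne: "1 \<le> length N" using False by (cases N) auto
    define v' where "v' = vt (Suc i)"
    have v'N: "v' = N ! 0" using False by (simp add: v'_def vt_def OS hd_conv_nth nth_append)
    have v'Nb: "v' \<in> Nb i" using v'N False sN by (metis length_greater_0_conv nth_mem)
    have pv': "par v' = vt i" using pi_eq(2)[OF im v'Nb] .
    have v'V: "v' \<in> V" "v' \<noteq> 1" using Nb_facts[OF im v'Nb] by auto
    have av': "anc (vt i) v'" using anc_par[OF v'V] pv' by simp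
    have dv': "dep v' = Suc (dep (vt i))" using dep_par[OF v'V] pv' by simp
    have tv': "tau v' = Suc i" using tvS v'_def by simp
    have "Pinv (Suc i)" unfolding Pinv_def
    proof (intro allI impI)
      fix k assume k: "0 < k \<and> k < length (OL (Suc i))"
      show "anc (par (OL (Suc i) ! k)) (vt (Suc i)) \<and> dep (par (OL (Suc i) ! k)) < dep (vt (Suc i)) \<and>
         length (OL (Suc i)) - k + 1 \<le> length (OL (tau (ad (vt (Suc i)) (Suc (dep (par (OL (Suc i) ! k))))))) \<and>
         length (OL (tau (par (OL (Suc i) ! k)))) \<le> length (OL (Suc i)) - k"
      proof (cases "k < length N")
        case True
        have x: "OL (Suc i) ! k = N ! k" using True by (simp add: OS nth_append)
        have "N ! k \<in> Nb i" using True sN nth_mem by blast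
        then have px: "par (OL (Suc i) ! k) = vt i" using pi_eq(2)[OF im] x by simp
        have "ad v' (Suc (dep (vt i))) = v'" using ad_self[OF v'V(1)] dv' by simp
        then show ?thesis unfolding px v'_def[symmetric] using av' dv' tv' tvi lenS True k L_def L1 by (simp; arith)
      next
        case False
        define k' where "k' = Suc (k - length N)"
        have k': "0 < k'" "k' < L" using k False lenS by (auto simp: k'_def)
        have x: "OL (Suc i) ! k = OL i ! k'"
          using False k OL_ne[OF im] by (cases "OL i") (auto simp: OS nth_append k'_def)
        let ?p = "par (OL i ! k')"
        have pd: "anc ?p (vt i)" "dep ?p < dep (vt i)"
          "L - k' + 1 \<le> length (OL (tau (ad (vt i) (Suc (dep ?p)))))" "length (OL (tau ?p)) \<le> L - k'"
          using PD[OF k'] by auto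
        have "ad v' (Suc (dep ?p)) = ad (vt i) (Suc (dep ?p))" using ad_same[OF av'] pd(2) by simp
        moreover have "L - k' = length (OL (Suc i)) - k" using lenS False k L1 by (simp add: k'_def)
        ultimately show ?thesis unfolding x v'_def[symmetric] using pd anc_trans[OF pd(1) av'] dv' by simp
      qed
    qed
    moreover have "Minv (Suc i)" unfolding Minv_def
    proof (intro allI impI)
      fix a b assume ab: "anc a b" "anc b (vt (Suc i))"
      have "b = v' \<or> anc b (vt i)" using anc_cases[OF v'V ab(2)[folded v'_def]] pv' by simp
      then show "length (OL (tau a)) \<le> length (OL (tau b))"
      proof
        assume b: "b = v'"
        have "a = v' \<or> anc a (vt i)" using anc_cases[OF v'V ab(1)[unfolded b]] pv' by simp
        then show ?thesis
        proof
          assume "anc a (vt i)"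
          then have "length (OL (tau a)) \<le> length (OL (tau (vt i)))" using MD anc_refl[OF viV] by blast
          then show ?thesis using b tv' tvi lenS L_def Nne by simp
        qed (use b in simp)
      next
        assume "anc b (vt i)" then show ?thesis using MD ab(1) by blast
      qed
    qed
    ultimately show ?thesis by simp
  next
    case True
    have OS': "OL (Suc i) = tl (OL i)" using OS True by simp
    have "OL (Suc i) \<noteq> []" using OL_ne[OF i] .
    then have "1 \<le> length (OL (Suc i))" by (cases "OL (Suc i)") auto
    then have L2: "2 \<le> L" using OS' L_def by simp
    define v' where "v' = vt (Suc i)"
    obtain a0 b0 r0 where ab: "OL i = a0 # b0 # r0" using L2 unfolding L_def
      by (metis Suc_le_length_iff numeral_2_eq_2)
    have v'1: "v' = OL i ! 1" unfolding v'_def vt_def OS' ab by simp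
    have v'V: "v' \<in> V" "v' \<noteq> 1" using OL_nth[OF im, of 1] L2 L_def v'1 by auto
    define p1 where "p1 = par v'"
    have pd1: "anc p1 (vt i)" "dep p1 < dep (vt i)"
      "L \<le> length (OL (tau (ad (vt i) (Suc (dep p1)))))" "length (OL (tau p1)) \<le> L - 1"
      using PD[of 1] L2 unfolding p1_def v'1 by auto
    have ap1: "anc p1 v'" using anc_par[OF v'V] p1_def by simp
    have dv': "dep v' = Suc (dep p1)" using dep_par[OF v'V] p1_def by simp
    have tv': "tau v' = Suc i" using tvS v'_def by simp
    have lenS': "length (OL (Suc i)) = L - 1" using OS' L_def by simp
    have "Pinv (Suc i)" unfolding Pinv_def
    proof (intro allI impI)
      fix k assume k: "0 < k \<and> k < length (OL (Suc i))"
      have x: "OL (Suc i) ! k = OL i ! Suc k" unfolding OS' ab by simp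
      let ?p = "par (OL i ! Suc k)"
      have pd: "anc ?p (vt i)" "dep ?p < dep (vt i)"
        "L - Suc k + 1 \<le> length (OL (tau (ad (vt i) (Suc (dep ?p)))))" "length (OL (tau ?p)) \<le> L - Suc k"
        using PD[of "Suc k"] k lenS' by auto
      have le: "dep ?p \<le> dep p1"
      proof (rule ccontr)
        assume "\<not> dep ?p \<le> dep p1"
        then have lt: "Suc (dep p1) \<le> dep ?p" by simp
        let ?u = "ad (vt i) (Suc (dep p1))"
        have u: "anc ?u (vt i)" "dep ?u = Suc (dep p1)" using ad[OF viV, of "Suc (dep p1)"] pd1(2) by auto
        have "anc ?u ?p" using anc_total[OF u(1) pd(1)] u(2) lt by simp
        then have "length (OL (tau ?u)) \<le> length (OL (tau ?p))" using MD pd(1) by blast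
        then show False using pd1(3) pd(4) k lenS' by simp
      qed
      have app1: "anc ?p p1" using anc_total[OF pd(1) pd1(1) le] .
      have apv': "anc ?p v'" using anc_trans[OF app1 ap1] .
      show "anc (par (OL (Suc i) ! k)) (vt (Suc i)) \<and> dep (par (OL (Suc i) ! k)) < dep (vt (Suc i)) \<and>
         length (OL (Suc i)) - k + 1 \<le> length (OL (tau (ad (vt (Suc i)) (Suc (dep (par (OL (Suc i) ! k))))))) \<and>
         length (OL (tau (par (OL (Suc i) ! k)))) \<le> length (OL (Suc i)) - k"
        unfolding x v'_def[symmetric]
      proof (intro conjI)
        show "anc ?p v'" by (rule apv')
        show "dep ?p < dep v'" using le dv' by simp
        show "length (OL (tau ?p)) \<le> length (OL (Suc i)) - k" using pd(4) lenS' by simp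
        show "length (OL (Suc i)) - k + 1 \<le> length (OL (tau (ad v' (Suc (dep ?p)))))"
        proof (cases "dep ?p = dep p1")
          case True
          have "ad v' (Suc (dep ?p)) = v'" using ad_self[OF v'V(1)] dv' True by simp
          then show ?thesis using tv' k lenS' by (simp; arith)
        next
          case False
          then have lt: "Suc (dep ?p) \<le> dep p1" using le by simp
          have "ad v' (Suc (dep ?p)) = ad p1 (Suc (dep ?p))" using ad_same[OF ap1 lt] .
          also have "\<dots> = ad (vt i) (Suc (dep ?p))" using ad_same[OF pd1(1) lt] by simp
          finally show ?thesis using pd(3) lenS' k by simp
        qed
      qed
    qed
    moreover have "Minv (Suc i)" unfolding Minv_def
    proof (intro allI impI)
      fix a b assume ab: "anc a b" "anc b (vt (Suc i))"
      have "b = v' \<or> anc b p1" using anc_cases[OF v'V ab(2)[folded v'_def]] p1_def by simp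
      then show "length (OL (tau a)) \<le> length (OL (tau b))"
      proof
        assume b: "b = v'"
        have "a = v' \<or> anc a p1" using anc_cases[OF v'V ab(1)[unfolded b]] p1_def by simp
        then show ?thesis
        proof
          assume "anc a p1"
          then have "length (OL (tau a)) \<le> length (OL (tau p1))" using MD pd1(1) by blast
          then show ?thesis using b tv' pd1(4) lenS' by simp
        qed (use b in simp)
      next
        assume "anc b p1" then show ?thesis using MD ab(1) anc_trans[OF _ pd1(1)] by blast
      qed
    qed
    ultimately show ?thesis by simp
  qed
qed

lemma PM: "i < m \<Longrightarrow> Pinv i \<and> Minv i"
proof (induction i)
  case 0 show ?case using PM0 by simp
next
  case (Suc i) then show ?case using PM_Suc by simp
qed

end

context dfs begin

lemma key:
  fixes M :: real
  assumes i: "i < m" and j: "0 < j" "j + 1 \<le> length (OL i)" "2 * j \<le> dep (vt i)"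
    and Mb: "\<And>t. t < m \<Longrightarrow> \<bar>real (length (OL t)) - 1 - real (dep (vt t)) / 2\<bar> \<le> M"
  shows "rev (OL i) ! (j - 1) \<in> V" "real (gdist E (rev (OL i) ! (j - 1)) (ad (vt i) (2 * j - 1))) \<le> 2 * M + 1"
proof -
  define L where "L = length (OL i)"
  define k where "k = L - j"
  have k: "0 < k" "k < L" using j by (auto simp: k_def L_def)
  have w: "rev (OL i) ! (j - 1) = OL i ! k" using j by (simp add: rev_nth k_def L_def)
  define x where "x = OL i ! k"
  have xV: "x \<in> V" "x \<noteq> 1" using OL_nth[OF i k(1)] k(2) by (auto simp: x_def L_def)
  then show "rev (OL i) ! (j - 1) \<in> V" using w x_def by simp
  define p where "p = par x"
  have pd: "anc p (vt i)" "dep p < dep (vt i)"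
    "L - k + 1 \<le> length (OL (tau (ad (vt i) (Suc (dep p)))))" "length (OL (tau p)) \<le> L - k"
    using conjunct1[OF PM[OF i]] k unfolding Pinv_def p_def x_def L_def by blast+
  define q where "q = dep p"
  have viV: "vt i \<in> V" using vt_facts[OF i] by simp
  define u where "u = ad (vt i) (Suc q)"
  have u: "anc u (vt i)" "dep u = Suc q" using ad[OF viV, of "Suc q"] pd(2) by (auto simp: u_def q_def)
  have uV: "u \<in> V" using ancD(1)[OF u(1)] .
  have pV: "p \<in> V" using ancD(1)[OF pd(1)] .
  have t1: "real (length (OL (tau u))) - 1 - real (dep (vt (tau u))) / 2 \<le> M"
    using Mb[OF tau(1)[OF uV]] by simp
  have t2: "real (dep (vt (tau p))) / 2 - (real (length (OL (tau p))) - 1) \<le> M"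
    using Mb[OF tau(1)[OF pV]] by simp
  have lu: "real j + 1 \<le> real (length (OL (tau u)))" using pd(3) j unfolding k_def L_def u_def q_def by simp
  have lp: "real (length (OL (tau p))) \<le> real j" using pd(4) j unfolding k_def L_def by simp
  have du: "real (dep (vt (tau u))) = real q + 1" using tau(2)[OF uV] u(2) by simp
  have dp: "real (dep (vt (tau p))) = real q" using tau(2)[OF pV] q_def by simp
  have "real (length (OL (tau u))) - 1 - (real q + 1) / 2 \<le> M" using t1 du by simp
  then have b1: "real j - (real q + 1) / 2 \<le> M" using lu by (simp add: field_simps)
  have b2: "real q / 2 - (real j - 1) \<le> M" using t2 lp dp by linarith
  define a where "a = ad (vt i) (2 * j - 1)"
  have a: "anc a (vt i)" "dep a = 2 * j - 1" using ad[OF viV, of "2 * j - 1"] j(3) by (auto simp: a_def)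
  have aV: "a \<in> V" using ancD(1)[OF a(1)] .
  have gxp: "gdist E x p = 1"
    using gdist_anc(1)[OF anc_par[OF xV]] dep_par[OF xV] by (simp add: p_def)
  have gpa: "real (gdist E p a) = \<bar>real q - (2 * real j - 1)\<bar>"
  proof (cases "q \<le> 2 * j - 1")
    case True
    have "anc p a" using anc_total[OF pd(1) a(1)] True a(2) q_def by simp
    then have "gdist E p a = dep a - dep p" by (rule gdist_anc(2))
    then show ?thesis using True a(2) j q_def by (simp add: of_nat_diff)
  next
    case False
    have "anc a p" using anc_total[OF a(1) pd(1)] False a(2) q_def by simp
    then have "gdist E p a = dep p - dep a" by (rule gdist_anc(1))
    then show ?thesis using False a(2) j q_def by (simp add: of_nat_diff)
  qed
  have "gdist E x a \<le> gdist E x p + gdist E p a"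
    using conn_walk[OF connE] xV pV aV by (intro gdist_triangle) auto
  then have "real (gdist E x a) \<le> 1 + \<bar>real q - (2 * real j - 1)\<bar>" using gxp gpa by simp
  also have "\<dots> \<le> 2 * M + 1"
  proof -
    have c1: "2 * real j - 1 - real q \<le> 2 * M" using b1 by (simp add: field_simps)
    have c2: "real q - (2 * real j - 1) \<le> 2 * M" using b2 by (simp add: field_simps)
    have "\<bar>real q - (2 * real j - 1)\<bar> \<le> 2 * M" using c1 c2 by (simp add: abs_le_iff)
    then show ?thesis by simp
  qed
  finally show "real (gdist E (rev (OL i) ! (j - 1)) (ad (vt i) (2 * j - 1))) \<le> 2 * M + 1"
    using w x_def a_def by simp
qed

end

lemma gdist_metric_facts:
  assumes c: "conn E V" and EF: "E \<subseteq> F"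
  shows "\<And>x. x \<in> V \<Longrightarrow> real (gdist F x x) = 0"
    "\<And>x y. x \<in> V \<Longrightarrow> y \<in> V \<Longrightarrow> real (gdist F x y) = real (gdist F y x)"
    "\<And>x y. x \<in> V \<Longrightarrow> y \<in> V \<Longrightarrow> 0 \<le> real (gdist F x y)"
    "\<And>x y z. x \<in> V \<Longrightarrow> y \<in> V \<Longrightarrow> z \<in> V \<Longrightarrow> real (gdist F x z) \<le> real (gdist F x y) + real (gdist F y z)"
proof -
  show "\<And>x. x \<in> V \<Longrightarrow> real (gdist F x x) = 0" using gdist_refl by simp
  show "\<And>x y. x \<in> V \<Longrightarrow> y \<in> V \<Longrightarrow> real (gdist F x y) = real (gdist F y x)"
    using gdist_sym conn_walk[OF c EF] by metis
  show "\<And>x y. x \<in> V \<Longrightarrow> y \<in> V \<Longrightarrow> 0 \<le> real (gdist F x y)" by simp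
  show "\<And>x y z. x \<in> V \<Longrightarrow> y \<in> V \<Longrightarrow> z \<in> V \<Longrightarrow> real (gdist F x z) \<le> real (gdist F x y) + real (gdist F y z)"
  proof -
    fix x y z assume "x \<in> V" "y \<in> V" "z \<in> V"
    then have "gdist F x z \<le> gdist F x y + gdist F y z"
      using conn_walk[OF c EF] by (intro gdist_triangle) auto
    then show "real (gdist F x z) \<le> real (gdist F x y) + real (gdist F y z)" by simp
  qed
qed

theorem lemma13:
  fixes m :: nat and E :: "nat set set" and Q :: "(nat \<times> nat) set"
  assumes "is_tree m E"
    and "finite Q"
    and "under Q (\<lambda>x. real_of_int (dfs_X m E x)) = under Q (\<lambda>x. real (dfs_H m E x) / 2)"
  shows "dGH {1..m} (\<lambda>u v. real (gdist (GX m E Q) u v)) 1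
             {1..m} (\<lambda>u v. real (gdist (GH m E Q) u v)) 1
         \<le> real (card (under Q (\<lambda>x. real_of_int (dfs_X m E x))))
             * (Max ((\<lambda>i. \<bar>real_of_int (dfs_X m E i) - real (dfs_H m E i) / 2\<bar>) ` {..<m}) + 2)"
proof -
  interpret dfs m E by unfold_locales (rule assms(1))
  define S where "S = under Q (\<lambda>x. real_of_int (dfs_X m E x))"
  define M where "M = Max ((\<lambda>i. \<bar>real_of_int (dfs_X m E i) - real (dfs_H m E i) / 2\<bar>) ` {..<m})"
  have finS: "finite S" using assms(2) unfolding S_def under_def by (auto intro: finite_subset)
  have Xeq: "dfs_X m E t = int (length (OL t)) - 1" if "t < m" for t
    using that by (simp add: dfs_X_def OL_def)
  have Heq: "dfs_H m E t = dep (vt t)" if "t < m" for t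
    using that gdist_root[OF vt_facts(2)[OF that]] by (simp add: dfs_H_def vt_odfs)
  have Mb: "\<bar>real (length (OL t)) - 1 - real (dep (vt t)) / 2\<bar> \<le> M" if "t < m" for t
  proof -
    have "\<bar>real_of_int (dfs_X m E t) - real (dfs_H m E t) / 2\<bar> \<le> M"
      unfolding M_def using that by (intro Max_ge) auto
    then show ?thesis using Xeq[OF that] Heq[OF that] by simp
  qed
  have M0: "0 \<le> M" using Mb[of 0] m1 by linarith
  have Sprop: "i < m \<and> 0 < j \<and> j + 1 \<le> length (OL i) \<and> 2 * j \<le> dep (vt i)" if s: "(i, j) \<in> S" for i j
  proof -
    have s1: "(i, j) \<in> Q" "0 < real j" "real j \<le> real_of_int (dfs_X m E i)" using s by (auto simp: S_def under_def)
    have im: "i < m"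
    proof (rule ccontr)
      assume "\<not> i < m" then have "dfs_X m E i = 0" by (simp add: dfs_X_def)
      then show False using s1 by simp
    qed
    have "(i, j) \<in> under Q (\<lambda>x. real (dfs_H m E x) / 2)" using s assms(3) by (simp add: S_def)
    then have "real j \<le> real (dfs_H m E i) / 2" by (simp add: under_def)
    then have "2 * j \<le> dep (vt i)" using Heq[OF im] by simp
    moreover have "j + 1 \<le> length (OL i)" using s1(3) Xeq[OF im] by simp
    ultimately show ?thesis using im s1(2) by simp
  qed
  define vv where "vv s = vt (fst s)" for s :: "nat \<times> nat"
  define ww where "ww s = rev (OL (fst s)) ! (snd s - 1)" for s :: "nat \<times> nat"
  define aa where "aa s = tree_anc m E (vt (fst s)) (2 * snd s - 1)" for s :: "nat \<times> nat"
  have GXe: "GX m E Q = E \<union> (\<lambda>s. {vv s, ww s}) ` S"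
  proof -
    have "{{odfs_v E i, rev (odfs_O E i) ! (j - 1)} | i j. (i, j) \<in> S} = (\<lambda>s. {vv s, ww s}) ` S"
    proof (intro equalityI subsetI)
      fix e assume "e \<in> {{odfs_v E i, rev (odfs_O E i) ! (j - 1)} | i j. (i, j) \<in> S}"
      then obtain i j where "e = {odfs_v E i, rev (odfs_O E i) ! (j - 1)}" "(i, j) \<in> S" by blast
      then show "e \<in> (\<lambda>s. {vv s, ww s}) ` S"
        by (intro rev_image_eqI[of "(i, j)"]) (auto simp: vv_def ww_def vt_odfs OL_def)
    next
      fix e assume "e \<in> (\<lambda>s. {vv s, ww s}) ` S"
      then obtain i j where "e = {vv (i, j), ww (i, j)}" "(i, j) \<in> S" by auto
      then show "e \<in> {{odfs_v E i, rev (odfs_O E i) ! (j - 1)} | i j. (i, j) \<in> S}"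
        by (auto simp: vv_def ww_def vt_odfs OL_def)
    qed
    then show ?thesis unfolding GX_def S_def by simp
  qed
  have GHe: "GH m E Q = E \<union> (\<lambda>s. {vv s, aa s}) ` S"
  proof -
    have "(i, j) \<in> Q \<and> 0 < 2 * j \<and> 2 * j \<le> dfs_H m E i \<longleftrightarrow> (i, j) \<in> S" for i j
    proof -
      have "(i, j) \<in> S \<longleftrightarrow> (i, j) \<in> under Q (\<lambda>x. real (dfs_H m E x) / 2)" by (simp add: S_def assms(3))
      also have "\<dots> \<longleftrightarrow> (i, j) \<in> Q \<and> 0 < 2 * j \<and> 2 * j \<le> dfs_H m E i" by (auto simp: under_def)
      finally show ?thesis by simp
    qed
    then have "{{odfs_v E i, tree_anc m E (odfs_v E i) (2 * j - 1)} | i j.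
                     (i, j) \<in> Q \<and> 0 < 2 * j \<and> 2 * j \<le> dfs_H m E i} = (\<lambda>s. {vv s, aa s}) ` S"
    proof (intro equalityI subsetI)
      fix e assume "e \<in> {{odfs_v E i, tree_anc m E (odfs_v E i) (2 * j - 1)} | i j.
                     (i, j) \<in> Q \<and> 0 < 2 * j \<and> 2 * j \<le> dfs_H m E i}"
      then obtain i j where "e = {odfs_v E i, tree_anc m E (odfs_v E i) (2 * j - 1)}"
        "(i, j) \<in> Q \<and> 0 < 2 * j \<and> 2 * j \<le> dfs_H m E i" by blast
      moreover assume "\<And>i j. ((i, j) \<in> Q \<and> 0 < 2 * j \<and> 2 * j \<le> dfs_H m E i) = ((i, j) \<in> S)"
      ultimately show "e \<in> (\<lambda>s. {vv s, aa s}) ` S"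
        by (intro rev_image_eqI[of "(i, j)"]) (auto simp: vv_def aa_def vt_odfs)
    next
      fix e assume "e \<in> (\<lambda>s. {vv s, aa s}) ` S"
      then obtain i j where "e = {vv (i, j), aa (i, j)}" "(i, j) \<in> S" by auto
      moreover assume "\<And>i j. ((i, j) \<in> Q \<and> 0 < 2 * j \<and> 2 * j \<le> dfs_H m E i) = ((i, j) \<in> S)"
      ultimately show "e \<in> {{odfs_v E i, tree_anc m E (odfs_v E i) (2 * j - 1)} | i j.
                     (i, j) \<in> Q \<and> 0 < 2 * j \<and> 2 * j \<le> dfs_H m E i}"
        by (auto simp: vv_def aa_def vt_odfs)
    qed
    then show ?thesis unfolding GH_def by simp
  qed
  have Sfacts: "vv s \<in> V \<and> ww s \<in> V \<and> aa s \<in> V \<and> real (gdist E (ww s) (aa s)) \<le> 2 * M + 1" if "s \<in> S" for s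
  proof -
    obtain i j where s: "s = (i, j)" by (cases s)
    have p: "i < m" "0 < j" "j + 1 \<le> length (OL i)" "2 * j \<le> dep (vt i)" using Sprop that s by auto
    have viV: "vt i \<in> V" using vt_facts[OF p(1)] by simp
    have ta: "aa s = ad (vt i) (2 * j - 1)" using tree_anc_eq[OF viV] p by (simp add: aa_def s)
    have "ad (vt i) (2 * j - 1) \<in> V" using ancD(1)[OF ad(1)[OF viV]] p by simp
    then show ?thesis using key[OF p Mb] viV ta by (simp add: vv_def ww_def s)
  qed
  have EX: "E \<subseteq> GX m E Q" and EH: "E \<subseteq> GH m E Q" by (auto simp: GX_def GH_def)
  have pert: "\<bar>real (gdist (GX m E Q) x y) - real (gdist (GH m E Q) x y)\<bar> \<le> (2 * M + 1) * real (card S)"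
    if "x \<in> V" "y \<in> V" for x y
    unfolding GXe GHe using perturb[OF finS connE _ _ that, of vv ww aa "2 * M + 1"] Sfacts by blast
  note f1 = gdist_metric_facts[OF connE EX] and f2 = gdist_metric_facts[OF connE EH]
  have "dGH V (\<lambda>u v. real (gdist (GX m E Q) u v)) 1 V (\<lambda>u v. real (gdist (GH m E Q) u v)) 1
        \<le> ((2 * M + 1) * real (card S)) / 2"
    by (rule dGH_bound[OF _ _ f1(1) f2(1) f1(2) f2(2) f1(3) f2(3) f1(4) f2(4) pert]) (use m1 in auto)
  also have "\<dots> \<le> real (card S) * (M + 2)" using M0 by (simp add: field_simps)
  finally show ?thesis unfolding S_def M_def .
qed

end
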